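(* (1) For every $r\in\mathbb N$, the category $\mathcal C_r$ is a full subcategory of $\mathcal C^{pol}\cap\mathcal C^{int}$ (each object of $\mathcal C_r$ being regarded as a $\mathbf U(\infty)$-module via $\zeta_r$). (2) For each $r\in\mathbb N$ there is a surjective algebra homomorphism $\mathbf U(\infty,r+1)\to\mathbf U(\infty,r)$ sending $\zeta_{r+1}(E_i),\zeta_{r+1}(F_i),\zeta_{r+1}(K_i)$ to $\zeta_r(E_i),\zeta_r(F_i),\zeta_r(K_i)$ respectively, for all $i\in\mathbb Z$. Hence $\mathcal C_r$ is a full subcategory of $\mathcal C_{r+1}$.
   Context: $v$ indeterminate. $\mathbf U(\infty)$ is the $\mathbb Q(v)$-algebra with generators $E_i,F_i,K_i,K_i^{-1}$ ($i\in\mathbb Z$) and relations: $K_iK_j=K_jK_i$, $K_iK_i^{-1}=1$; $K_iE_j=v^{\delta_{i,j}-\delta_{i,j+1}}E_jK_i$; $K_iF_j=v^{\delta_{i,j+1}-\delta_{i,j}}F_jK_i$; $E_iE_j=E_jE_i$, $F_iF_j=F_jF_i$ if $|i-j|>1$; $E_iF_j-F_jE_i=\delta_{i,j}\frac{\widetilde K_i-\widetilde K_i^{-1}}{v-v^{-1}}$, $\widetilde K_i=K_iK_{i+1}^{-1}$; $E_i^2E_j-(v+v^{-1})E_iE_jE_i+E_jE_i^2=0$ and likewise for $F$ if $|i-j|=1$; coproduct $\Delta(E_i)=E_i\otimes\widetilde K_i+1\otimes E_i$, $\Delta(F_i)=F_i\otimes1+\widetilde K_i^{-1}\otimes F_i$,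 $\Delta(K_j)=K_j\otimes K_j$. ${\bf\Omega}_\infty$ has basis $\{\omega_i\}_{i\in\mathbb Z}$ with $K_a\omega_b=v^{\delta_{a,b}}\omega_b$, $E_a\omega_b=\delta_{a+1,b}\omega_a$, $F_a\omega_b=\delta_{a,b}\omega_{a+1}$; ${\bf\Omega}_\infty^{\otimes r}$ is a $\mathbf U(\infty)$-module via $\Delta$. The Hecke algebra ${\boldsymbol{\mathcal H}}$ of $\mathfrak S_r$ over $\mathbb Q(v)$ (basis $\mathcal T_w$ with $\mathcal T_s\mathcal T_w=\mathcal T_{sw}$ if $\ell(sw)>\ell(w)$, else $(v-v^{-1})\mathcal T_w+\mathcal T_{sw}$) acts on the right by $(\omega_{i_1}\cdots\omega_{i_r})\mathcal T_{(j,j+1)}=\omega_{i_1}\cdots\omega_{i_{j+1}}\omega_{i_j}\cdots\omega_{i_r}$ if $i_j<i_{j+1}$; $=v\,\omega_{i_1}\cdots\omega_{i_r}$ if $i_j=i_{j+1}$; $=(v-v^{-1})\omega_{i_1}\cdots\omega_{i_r}+\omega_{i_1}\cdots\omega_{i_{j+1}}\omega_{i_j}\cdots\omega_{i_r}$ if $i_j>i_{j+1}$. ${\boldsymbol{\mathcal S}}(\infty,r)=\operatorname{End}_{\boldsymbol{\mathcal H}}({\bf\Omega}_\infty^{\otimes r})$; the commuting actions give $\zeta_r:\mathbf U(\infty)\to{\boldsymbol{\mathcal S}}(\infty,r)$, and $\mathbf U(\infty,r)=\zeta_r(\mathbf U(\infty))$. For a $\mathbf U(\infty)$-module $M$ and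 an integer sequence $\lambda=(\lambda_i)_{i\in\mathbb Z}$, $M_\lambda=\{x:K_ix=v^{\lambda_i}x\ \forall i\}$; $M$ is a weight module if $M=\bigoplus_\lambda M_\lambda$ (over all integer sequences). $\mathcal C^{pol}$: weight modules all of whose weights $\lambda$ (with $M_\lambda\ne0$) are finitely supported with nonnegative entries. $\mathcal C^{int}$: weight modules such that for all $x\in M$ and $i$, $E_i^nx=F_i^nx=0$ for $n\gg0$. $\mathcal C_r$: the category of $\mathbf U(\infty,r)$-modules which, regarded as $\mathbf U(\infty)$-modules via $\zeta_r$, are weight modules (a full subcategory of $\mathbf U(\infty,r)$-modules); via the homomorphism in (2), $\mathbf U(\infty,r)$-modules are $\mathbf U(\infty,r+1)$-modules. *)

theory Defs
  imports Main "HOL-Computational_Algebra.Polynomial" "HOL-Computational_Algebra.Fraction_Field"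
begin

type_synonym K = "rat poly fract"
(* a vector of Omega^(tensor r) is a finitely supported coefficient function on
   words w = (i_1,...,i_r) (lists of integers of length r); omega_w is the basis vector *)
type_synonym tvec = "int list \<Rightarrow> K"
type_synonym top = "tvec \<Rightarrow> tvec"

definition vq :: K where "vq = Fract [:0, 1:] 1"

definition Tsp :: "nat \<Rightarrow> tvec set" where
  "Tsp r = {x. finite {w. x w \<noteq> 0} \<and> (\<forall>w. x w \<noteq> 0 \<longrightarrow> length w = r)}"

definition lin_ext :: "(int list \<Rightarrow> tvec) \<Rightarrow> top" where
  "lin_ext f x = (\<lambda>u. \<Sum>w\<in>{w. x w \<noteq> 0}. x w * f w u)"

(* operators on Omega^(tensor r), represented canonically: zero outside Tsp r *)
definition restr :: "nat \<Rightarrow> top \<Rightarrow> top" where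
  "restr r A = (\<lambda>x. if x \<in> Tsp r then A x else (\<lambda>_. 0))"

(* exponent of K~_a = K_a K_{a+1}^{-1} on omega_b *)
definition dK :: "int \<Rightarrow> int \<Rightarrow> int" where
  "dK a b = (if b = a then 1 else 0) - (if b = a + 1 then 1 else 0)"

(* images of basis vectors under the iterated coproduct:
   Delta^(r)(E_a) = sum_k 1^(k-1) (x) E_a (x) K~_a^(r-k)
   Delta^(r)(F_a) = sum_k K~_a^{-1 (k-1)} (x) F_a (x) 1^(r-k)
   Delta^(r)(K_a) = K_a^(r) *)
definition imgE :: "int \<Rightarrow> int list \<Rightarrow> tvec" where
  "imgE a w u = (\<Sum>k<length w. if w ! k = a + 1 \<and> u = w[k := a]
       then vq powi (\<Sum>j\<in>{k<..<length w}. dK a (w ! j)) else 0)"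

definition imgF :: "int \<Rightarrow> int list \<Rightarrow> tvec" where
  "imgF a w u = (\<Sum>k<length w. if w ! k = a \<and> u = w[k := a + 1]
       then vq powi (- (\<Sum>j<k. dK a (w ! j))) else 0)"

definition imgK :: "int \<Rightarrow> int list \<Rightarrow> tvec" where
  "imgK a w u = (if u = w then vq powi int (length (filter (\<lambda>b. b = a) w)) else 0)"

definition imgKinv :: "int \<Rightarrow> int list \<Rightarrow> tvec" where
  "imgKinv a w u = (if u = w then vq powi (- int (length (filter (\<lambda>b. b = a) w))) else 0)"

definition zE :: "nat \<Rightarrow> int \<Rightarrow> top" where "zE r a = restr r (lin_ext (imgE a))"
definition zF :: "nat \<Rightarrow> int \<Rightarrow> top" where "zF r a = restr r (lin_ext (imgF a))"
definition zK :: "nat \<Rightarrow> int \<Rightarrow> top" where "zK r a = restr r (lin_ext (imgK a))"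
definition zKinv :: "nat \<Rightarrow> int \<Rightarrow> top" where "zKinv r a = restr r (lin_ext (imgKinv a))"

(* U(infinity,r) = zeta_r(U(infinity)) = subalgebra of End(Omega^(tensor r)) generated
   by the images of the generators *)
inductive_set Ualg :: "nat \<Rightarrow> top set" for r :: nat where
  one: "restr r id \<in> Ualg r"
| genE: "zE r a \<in> Ualg r"
| genF: "zF r a \<in> Ualg r"
| genK: "zK r a \<in> Ualg r"
| genKinv: "zKinv r a \<in> Ualg r"
| add: "A \<in> Ualg r \<Longrightarrow> B \<in> Ualg r \<Longrightarrow> (\<lambda>x u. A x u + B x u) \<in> Ualg r"
| smul: "A \<in> Ualg r \<Longrightarrow> (\<lambda>x u. c * A x u) \<in> Ualg r"
| comp: "A \<in> Ualg r \<Longrightarrow> B \<in> Ualg r \<Longrightarrow> A \<circ> B \<in> Ualg r"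

definition Umodule :: "nat \<Rightarrow> (K \<Rightarrow> 'm::ab_group_add \<Rightarrow> 'm) \<Rightarrow> (top \<Rightarrow> 'm \<Rightarrow> 'm) \<Rightarrow> bool" where
  "Umodule r sm rho \<longleftrightarrow> vector_space sm
     \<and> (\<forall>A\<in>Ualg r. Vector_Spaces.linear sm sm (rho A))
     \<and> rho (restr r id) = id
     \<and> (\<forall>A\<in>Ualg r. \<forall>B\<in>Ualg r. rho (\<lambda>x u. A x u + B x u) = (\<lambda>m. rho A m + rho B m))
     \<and> (\<forall>c. \<forall>A\<in>Ualg r. rho (\<lambda>x u. c * A x u) = (\<lambda>m. sm c (rho A m)))
     \<and> (\<forall>A\<in>Ualg r. \<forall>B\<in>Ualg r. rho (A \<circ> B) = rho A \<circ> rho B)"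

definition Uinf_module :: "(K \<Rightarrow> 'm::ab_group_add \<Rightarrow> 'm) \<Rightarrow> (int \<Rightarrow> 'm \<Rightarrow> 'm) \<Rightarrow> (int \<Rightarrow> 'm \<Rightarrow> 'm)
     \<Rightarrow> (int \<Rightarrow> 'm \<Rightarrow> 'm) \<Rightarrow> (int \<Rightarrow> 'm \<Rightarrow> 'm) \<Rightarrow> bool" where
  "Uinf_module sm E F Kp Km \<longleftrightarrow> vector_space sm
     \<and> (\<forall>i. Vector_Spaces.linear sm sm (E i) \<and> Vector_Spaces.linear sm sm (F i)
            \<and> Vector_Spaces.linear sm sm (Kp i) \<and> Vector_Spaces.linear sm sm (Km i))
     \<and> (\<forall>i j m. Kp i (Kp j m) = Kp j (Kp i m))
     \<and> (\<forall>i m. Kp i (Km i m) = m \<and> Km i (Kp i m) = m)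
     \<and> (\<forall>i j m. Kp i (E j m) = sm (vq powi ((if i = j then 1 else 0) - (if i = j + 1 then 1 else 0))) (E j (Kp i m)))
     \<and> (\<forall>i j m. Kp i (F j m) = sm (vq powi ((if i = j + 1 then 1 else 0) - (if i = j then 1 else 0))) (F j (Kp i m)))
     \<and> (\<forall>i j m. \<bar>i - j\<bar> > 1 \<longrightarrow> E i (E j m) = E j (E i m) \<and> F i (F j m) = F j (F i m))
     \<and> (\<forall>i j m. E i (F j m) - F j (E i m) =
            (if i = j then sm (inverse (vq - inverse vq)) (Kp i (Km (i + 1) m) - Kp (i + 1) (Km i m)) else 0))
     \<and> (\<forall>i j m. \<bar>i - j\<bar> = 1 \<longrightarrow>
            E i (E i (E j m)) - sm (vq + inverse vq) (E i (E j (E i m))) + E j (E i (E i m)) = 0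
          \<and> F i (F i (F j m)) - sm (vq + inverse vq) (F i (F j (F i m))) + F j (F i (F i m)) = 0)"

definition weight_space :: "(K \<Rightarrow> 'm::ab_group_add \<Rightarrow> 'm) \<Rightarrow> (int \<Rightarrow> 'm \<Rightarrow> 'm) \<Rightarrow> (int \<Rightarrow> int) \<Rightarrow> 'm set" where
  "weight_space sm Kp lam = {m. \<forall>i. Kp i m = sm (vq powi lam i) m}"

(* M = sum of its weight spaces (the sum is automatically direct) *)
definition weight_module :: "(K \<Rightarrow> 'm::ab_group_add \<Rightarrow> 'm) \<Rightarrow> (int \<Rightarrow> 'm \<Rightarrow> 'm) \<Rightarrow> bool" where
  "weight_module sm Kp \<longleftrightarrow> (\<forall>m. \<exists>L f. finite L \<and> (\<forall>lam\<in>L. f lam \<in> weight_space sm Kp lam)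
                                  \<and> m = (\<Sum>lam\<in>L. f lam))"

definition Cpol :: "(K \<Rightarrow> 'm::ab_group_add \<Rightarrow> 'm) \<Rightarrow> (int \<Rightarrow> 'm \<Rightarrow> 'm) \<Rightarrow> bool" where
  "Cpol sm Kp \<longleftrightarrow> weight_module sm Kp
     \<and> (\<forall>lam. (\<exists>m\<in>weight_space sm Kp lam. m \<noteq> 0) \<longrightarrow> finite {i. lam i \<noteq> 0} \<and> (\<forall>i. 0 \<le> lam i))"

definition Cint :: "(K \<Rightarrow> 'm::ab_group_add \<Rightarrow> 'm) \<Rightarrow> (int \<Rightarrow> 'm \<Rightarrow> 'm) \<Rightarrow> (int \<Rightarrow> 'm \<Rightarrow> 'm)
     \<Rightarrow> (int \<Rightarrow> 'm \<Rightarrow> 'm) \<Rightarrow> bool" where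
  "Cint sm E F Kp \<longleftrightarrow> weight_module sm Kp
     \<and> (\<forall>m i. \<exists>N. \<forall>n\<ge>N. (E i ^^ n) m = 0 \<and> (F i ^^ n) m = 0)"

definition Cobj :: "nat \<Rightarrow> (K \<Rightarrow> 'm::ab_group_add \<Rightarrow> 'm) \<Rightarrow> (top \<Rightarrow> 'm \<Rightarrow> 'm) \<Rightarrow> bool" where
  "Cobj r sm rho \<longleftrightarrow> Umodule r sm rho \<and> weight_module sm (\<lambda>i. rho (zK r i))"

definition Uhom :: "nat \<Rightarrow> (top \<Rightarrow> top) \<Rightarrow> bool" where
  "Uhom r phi \<longleftrightarrow> phi ` Ualg (Suc r) = Ualg r
     \<and> phi (restr (Suc r) id) = restr r id
     \<and> (\<forall>A\<in>Ualg (Suc r). \<forall>B\<in>Ualg (Suc r). phi (\<lambda>x u. A x u + B x u) = (\<lambda>x u. phi A x u + phi B x u))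
     \<and> (\<forall>c. \<forall>A\<in>Ualg (Suc r). phi (\<lambda>x u. c * A x u) = (\<lambda>x u. c * phi A x u))
     \<and> (\<forall>A\<in>Ualg (Suc r). \<forall>B\<in>Ualg (Suc r). phi (A \<circ> B) = phi A \<circ> phi B)
     \<and> (\<forall>i. phi (zE (Suc r) i) = zE r i \<and> phi (zF (Suc r) i) = zF r i \<and> phi (zK (Suc r) i) = zK r i)"

end

theory Submission
  imports Defs
begin

definition cnt :: "int \<Rightarrow> int list \<Rightarrow> nat" where
  "cnt a u = length (filter (\<lambda>b. b = a) u)"

definition kt :: "int \<Rightarrow> int list \<Rightarrow> int" where
  "kt a u = sum_list (map (dK a) u)"

definition myE :: "int \<Rightarrow> tvec \<Rightarrow> tvec" where
  "myE a x u = (\<Sum>k<length u. if u ! k = a then x (u[k := a + 1]) *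
       vq powi (\<Sum>j\<in>{k<..<length u}. dK a (u ! j)) else 0)"

definition myF :: "int \<Rightarrow> tvec \<Rightarrow> tvec" where
  "myF a x u = (\<Sum>k<length u. if u ! k = a + 1 then x (u[k := a]) *
       vq powi (- (\<Sum>j<k. dK a (u ! j))) else 0)"

definition myK :: "int \<Rightarrow> tvec \<Rightarrow> tvec" where
  "myK a x u = vq powi int (cnt a u) * x u"

definition myKi :: "int \<Rightarrow> tvec \<Rightarrow> tvec" where
  "myKi a x u = vq powi (- int (cnt a u)) * x u"

lemma vq_nz[simp]: "vq \<noteq> 0"
  by (simp add: vq_def eq_fract Zero_fract_def)

lemma sum_delta_eq:
  fixes x e :: "int list \<Rightarrow> K"
  assumes "finite S"
  shows "(\<Sum>w\<in>S. x w * (if w = c then e w else 0)) = (if c \<in> S then x c * e c else 0)"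
proof -
  have "(\<Sum>w\<in>S. x w * (if w = c then e w else 0)) = (\<Sum>w\<in>S. if w = c then x w * e w else 0)"
    by (rule sum.cong) auto
  also have "\<dots> = (if c \<in> S then x c * e c else 0)" using assms by (simp add: sum.delta)
  finally show ?thesis .
qed

lemma upd_char:
  assumes "k < length u"
  shows "(w ! k = b \<and> u = w[k := a]) \<longleftrightarrow> (u ! k = a \<and> w = u[k := b])"
proof
  assume h: "w ! k = b \<and> u = w[k := a]"
  then have l: "length w = length u" by simp
  show "u ! k = a \<and> w = u[k := b]"
    using h l assms by (auto intro!: nth_equalityI simp: nth_list_update)
next
  assume h: "u ! k = a \<and> w = u[k := b]"
  then show "w ! k = b \<and> u = w[k := a]" using assms
    by (auto intro!: nth_equalityI simp: nth_list_update)
qed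

lemma linE:
  assumes fin: "finite {w. x w \<noteq> 0}"
  shows "lin_ext (imgE a) x u = myE a x u"
proof -
  let ?S = "{w. x w \<noteq> 0}"
  let ?e = "\<lambda>w k. vq powi (\<Sum>j\<in>{k<..<length w}. dK a (w ! j))"
  have step1: "(\<Sum>k<length w. if w ! k = a + 1 \<and> u = w[k := a] then ?e w k else 0)
      = (\<Sum>k<length u. if w ! k = a + 1 \<and> u = w[k := a] then ?e w k else 0)" for w
  proof (cases "length w = length u")
    case True then show ?thesis by simp
  next
    case False
    then have "\<And>k. \<not> (u = w[k := a])" by auto
    then show ?thesis by simp
  qed
  have "lin_ext (imgE a) x u = (\<Sum>w\<in>?S. x w * (\<Sum>k<length u. if w ! k = a + 1 \<and> u = w[k := a] then ?e w k else 0))"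
    unfolding lin_ext_def imgE_def using step1 by simp
  also have "\<dots> = (\<Sum>k<length u. \<Sum>w\<in>?S. x w * (if w ! k = a + 1 \<and> u = w[k := a] then ?e w k else 0))"
    by (simp add: sum_distrib_left sum.swap[of _ ?S])
  also have "\<dots> = (\<Sum>k<length u. \<Sum>w\<in>?S. x w * (if u ! k = a then (if w = u[k := a + 1] then ?e w k else 0) else 0))"
    by (intro sum.cong refl) (simp add: upd_char)
  also have "\<dots> = (\<Sum>k<length u. if u ! k = a then x (u[k := a + 1]) * ?e (u[k := a + 1]) k else 0)"
    by (intro sum.cong refl) (auto simp: sum_delta_eq[OF fin])
  also have "\<dots> = myE a x u"
    unfolding myE_def
    by (intro sum.cong refl) (auto intro!: sum.cong arg_cong[where f="\<lambda>t. vq powi t"])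
  finally show ?thesis .
qed

lemma linF:
  assumes fin: "finite {w. x w \<noteq> 0}"
  shows "lin_ext (imgF a) x u = myF a x u"
proof -
  let ?S = "{w. x w \<noteq> 0}"
  let ?e = "\<lambda>w k. vq powi (- (\<Sum>j<k. dK a (w ! j)))"
  have upd: "k < length u \<Longrightarrow> (w ! k = a \<and> u = w[k := a + 1]) \<longleftrightarrow> (u ! k = a + 1 \<and> w = u[k := a])" for k w
    using upd_char[of k u w a "a+1"] by simp
  have step1: "(\<Sum>k<length w. if w ! k = a \<and> u = w[k := a + 1] then ?e w k else 0)
      = (\<Sum>k<length u. if w ! k = a \<and> u = w[k := a + 1] then ?e w k else 0)" for w
  proof (cases "length w = length u")
    case True then show ?thesis by simp
  next
    case False
    then have "\<And>k. \<not> (u = w[k := a + 1])" by auto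
    then show ?thesis by simp
  qed
  have "lin_ext (imgF a) x u = (\<Sum>w\<in>?S. x w * (\<Sum>k<length u. if w ! k = a \<and> u = w[k := a + 1] then ?e w k else 0))"
    unfolding lin_ext_def imgF_def using step1 by simp
  also have "\<dots> = (\<Sum>k<length u. \<Sum>w\<in>?S. x w * (if w ! k = a \<and> u = w[k := a + 1] then ?e w k else 0))"
    by (simp add: sum_distrib_left sum.swap[of _ ?S])
  also have "\<dots> = (\<Sum>k<length u. \<Sum>w\<in>?S. x w * (if u ! k = a + 1 then (if w = u[k := a] then ?e w k else 0) else 0))"
    by (intro sum.cong refl) (simp add: upd)
  also have "\<dots> = (\<Sum>k<length u. if u ! k = a + 1 then x (u[k := a]) * ?e (u[k := a]) k else 0)"
    by (intro sum.cong refl) (auto simp: sum_delta_eq[OF fin])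
  also have "\<dots> = myF a x u"
    unfolding myF_def
    by (intro sum.cong refl) (auto intro!: sum.cong arg_cong[where f="\<lambda>t. vq powi t"])
  finally show ?thesis .
qed

lemma linK:
  assumes fin: "finite {w. x w \<noteq> 0}"
  shows "lin_ext (imgK a) x u = myK a x u"
  unfolding lin_ext_def imgK_def myK_def cnt_def using sum_delta_eq[OF fin, of x u "\<lambda>w. vq powi int (length (filter (\<lambda>b. b = a) w))"]
  by (auto simp: eq_commute[of u] mult.commute)

lemma linKi:
  assumes fin: "finite {w. x w \<noteq> 0}"
  shows "lin_ext (imgKinv a) x u = myKi a x u"
  unfolding lin_ext_def imgKinv_def myKi_def cnt_def using sum_delta_eq[OF fin, of x u "\<lambda>w. vq powi (- int (length (filter (\<lambda>b. b = a) w)))"]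
  by (auto simp: eq_commute[of u] mult.commute)

lemma kt_alt: "kt a u = (\<Sum>j<length u. dK a (u ! j))"
  unfolding kt_def by (simp add: sum_list_sum_nth atLeast0LessThan)

lemma kt_Nil[simp]: "kt a [] = 0" by (simp add: kt_def)
lemma kt_snoc[simp]: "kt a (u @ [b]) = kt a u + dK a b" by (simp add: kt_def)

lemma myE_Nil[simp]: "myE a x [] = 0" by (simp add: myE_def)
lemma myF_Nil[simp]: "myF a x [] = 0" by (simp add: myF_def)

lemma ioo_Suc: "k < n \<Longrightarrow> {k<..<Suc n} = insert n {k<..<n}" by auto

lemma myE_snoc:
  "myE a x (u @ [b]) = vq powi dK a b * myE a (\<lambda>w. x (w @ [b])) u
      + (if b = a then x (u @ [a + 1]) else 0)"
proof -
  have t: "(if (u @ [b]) ! k = a then x ((u @ [b])[k := a + 1]) *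
       vq powi (\<Sum>j\<in>{k<..<length (u @ [b])}. dK a ((u @ [b]) ! j)) else 0)
     = vq powi dK a b * (if u ! k = a then x (u[k := a + 1] @ [b]) *
       vq powi (\<Sum>j\<in>{k<..<length u}. dK a (u ! j)) else 0)" if k: "k < length u" for k
  proof -
    have "(\<Sum>j\<in>{k<..<length (u @ [b])}. dK a ((u @ [b]) ! j)) = (\<Sum>j\<in>{k<..<length u}. dK a (u ! j)) + dK a b"
    proof -
      have "(\<Sum>j\<in>{k<..<length (u @ [b])}. dK a ((u @ [b]) ! j)) = dK a b + (\<Sum>j\<in>{k<..<length u}. dK a ((u @ [b]) ! j))"
        using k by (simp add: ioo_Suc nth_append)
      also have "(\<Sum>j\<in>{k<..<length u}. dK a ((u @ [b]) ! j)) = (\<Sum>j\<in>{k<..<length u}. dK a (u ! j))"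
        by (rule sum.cong) (auto simp: nth_append)
      finally show ?thesis by simp
    qed
    then show ?thesis using k
      by (simp add: nth_append list_update_append power_int_add)
  qed
  have l: "(if (u @ [b]) ! length u = a then x ((u @ [b])[length u := a + 1]) *
       vq powi (\<Sum>j\<in>{length u<..<length (u @ [b])}. dK a ((u @ [b]) ! j)) else 0)
     = (if b = a then x (u @ [a + 1]) else 0)"
  proof -
    have e: "{length u<..<Suc (length u)} = {}" by auto
    show ?thesis by (simp add: e)
  qed
  let ?F = "\<lambda>k. (if (u @ [b]) ! k = a then x ((u @ [b])[k := a + 1]) *
       vq powi (\<Sum>j\<in>{k<..<length (u @ [b])}. dK a ((u @ [b]) ! j)) else 0)"
  have "myE a x (u @ [b]) = (\<Sum>k<length (u @ [b]). ?F k)" unfolding myE_def by (rule refl)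
  also have "\<dots> = (\<Sum>k<length u. ?F k) + ?F (length u)"
    by (simp only: length_append_singleton sum.lessThan_Suc)
  also have "(\<Sum>k<length u. ?F k) = vq powi dK a b * myE a (\<lambda>w. x (w @ [b])) u"
    unfolding myE_def sum_distrib_left by (rule sum.cong) (auto simp: t)
  finally show ?thesis using l by simp
qed

lemma myF_snoc:
  "myF a x (u @ [b]) = myF a (\<lambda>w. x (w @ [b])) u
      + (if b = a + 1 then inverse (vq powi kt a u) * x (u @ [a]) else 0)"
proof -
  have t: "(if (u @ [b]) ! k = a + 1 then x ((u @ [b])[k := a]) *
       vq powi (- (\<Sum>j<k. dK a ((u @ [b]) ! j))) else 0)
     = (if u ! k = a + 1 then x (u[k := a] @ [b]) *
       vq powi (- (\<Sum>j<k. dK a (u ! j))) else 0)" if k: "k < length u" for k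
  proof -
    have "(\<Sum>j<k. dK a ((u @ [b]) ! j)) = (\<Sum>j<k. dK a (u ! j))"
      by (rule sum.cong) (use k in \<open>auto simp: nth_append\<close>)
    then show ?thesis using k
      by (simp add: nth_append list_update_append)
  qed
  have l: "(if (u @ [b]) ! length u = a + 1 then x ((u @ [b])[length u := a]) *
       vq powi (- (\<Sum>j<length u. dK a ((u @ [b]) ! j))) else 0)
     = (if b = a + 1 then inverse (vq powi kt a u) * x (u @ [a]) else 0)"
  proof -
    have "(\<Sum>j<length u. dK a ((u @ [c]) ! j)) = kt a u" for c
      unfolding kt_alt by (rule sum.cong) (auto simp: nth_append)
    then show ?thesis by (simp add: mult.commute power_int_minus)
  qed
  let ?F = "\<lambda>k. (if (u @ [b]) ! k = a + 1 then x ((u @ [b])[k := a]) *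
       vq powi (- (\<Sum>j<k. dK a ((u @ [b]) ! j))) else 0)"
  have "myF a x (u @ [b]) = (\<Sum>k<length (u @ [b]). ?F k)" unfolding myF_def by (rule refl)
  also have "\<dots> = (\<Sum>k<length u. ?F k) + ?F (length u)"
    by (simp only: length_append_singleton sum.lessThan_Suc)
  also have "(\<Sum>k<length u. ?F k) = myF a (\<lambda>w. x (w @ [b])) u"
    unfolding myF_def by (rule sum.cong) (auto simp: t)
  finally show ?thesis using l by simp
qed

lemma myE_add[simp]: "myE a (\<lambda>w. f w + g w) u = myE a f u + myE a g u"
  unfolding myE_def by (simp add: sum.distrib[symmetric], intro sum.cong) (auto simp: distrib_right)
lemma myE_cmul[simp]: "myE a (\<lambda>w. c * f w) u = c * myE a f u"
  unfolding myE_def by (simp add: sum_distrib_left, intro sum.cong) auto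
lemma myE_zero[simp]: "myE a (\<lambda>w. 0) u = 0"
  unfolding myE_def by (simp cong: if_cong)
lemma myF_add[simp]: "myF a (\<lambda>w. f w + g w) u = myF a f u + myF a g u"
  unfolding myF_def by (simp add: sum.distrib[symmetric], intro sum.cong) (auto simp: distrib_right)
lemma myF_cmul[simp]: "myF a (\<lambda>w. c * f w) u = c * myF a f u"
  unfolding myF_def by (simp add: sum_distrib_left, intro sum.cong) auto
lemma myF_zero[simp]: "myF a (\<lambda>w. 0) u = 0"
  unfolding myF_def by (simp cong: if_cong)

lemma myE_scal:
  assumes "\<And>k. k < length u \<Longrightarrow> u ! k = a \<Longrightarrow> h (u[k := a + 1]) = h u + d"
  shows "myE a (\<lambda>w. vq powi (h w) * f w) u = vq powi (h u + d) * myE a f u"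
  unfolding myE_def sum_distrib_left
  by (intro sum.cong) (auto simp: assms)

lemma myF_scal:
  assumes "\<And>k. k < length u \<Longrightarrow> u ! k = a + 1 \<Longrightarrow> h (u[k := a]) = h u + d"
  shows "myF a (\<lambda>w. vq powi (h w) * f w) u = vq powi (h u + d) * myF a f u"
  unfolding myF_def sum_distrib_left
  by (intro sum.cong) (auto simp: assms)

lemma kt_upd: "k < length u \<Longrightarrow> kt c (u[k := y]) = kt c u - dK c (u ! k) + dK c y"
  by (induction u arbitrary: k) (auto simp: kt_def split: nat.split)

lemma myE_kt[simp]: "myE a (\<lambda>w. inverse (vq powi kt c w) * f w) u
   = inverse (vq powi kt c u) * (vq powi (dK c a - dK c (a + 1)) * myE a f u)"
proof -
  have "myE a (\<lambda>w. inverse (vq powi kt c w) * f w) u = myE a (\<lambda>w. vq powi (- kt c w) * f w) u"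
    by (simp add: power_int_minus)
  also have "\<dots> = vq powi (- kt c u + (dK c a - dK c (a + 1))) * myE a f u"
    by (rule myE_scal) (simp add: kt_upd)
  also have "vq powi (- kt c u + (dK c a - dK c (a + 1))) = inverse (vq powi kt c u) * vq powi (dK c a - dK c (a + 1))"
    by (subst power_int_add) (simp_all add: power_int_minus)
  finally show ?thesis by (simp add: mult.assoc)
qed

lemma myF_kt[simp]: "myF a (\<lambda>w. inverse (vq powi kt c w) * f w) u
   = inverse (vq powi kt c u) * (vq powi (dK c (a + 1) - dK c a) * myF a f u)"
proof -
  have "myF a (\<lambda>w. inverse (vq powi kt c w) * f w) u = myF a (\<lambda>w. vq powi (- kt c w) * f w) u"
    by (simp add: power_int_minus)
  also have "\<dots> = vq powi (- kt c u + (dK c (a + 1) - dK c a)) * myF a f u"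
    by (rule myF_scal) (simp add: kt_upd)
  also have "vq powi (- kt c u + (dK c (a + 1) - dK c a)) = inverse (vq powi kt c u) * vq powi (dK c (a + 1) - dK c a)"
    by (subst power_int_add) (simp_all add: power_int_minus)
  finally show ?thesis by (simp add: mult.assoc)
qed

lemma myE_if[simp]: "myE a (\<lambda>w. if P then f w else 0) u = (if P then myE a f u else 0)"
  by simp
lemma myF_if[simp]: "myF a (\<lambda>w. if P then f w else 0) u = (if P then myF a f u else 0)"
  by simp

lemma solve3: "a - c * b + d = (0::K) \<Longrightarrow> a = c * b - d" by (simp add: algebra_simps)

lemma serreE1:
  "myE i (myE i (myE (i+1) x)) u - (vq + inverse vq) * myE i (myE (i+1) (myE i x)) u
     + myE (i+1) (myE i (myE i x)) u = 0"
proof (induction u arbitrary: x rule: rev_induct)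
  case Nil
  then show ?case by simp
next
  case (snoc b u)
  note IH = solve3[OF snoc[of "\<lambda>w. x (w @ [b])"]]
  consider "b = i" | "b = i + 1" | "b = i + 2" | "b \<noteq> i" "b \<noteq> i + 1" "b \<noteq> i + 2" by blast
  then show ?case
    by cases (use IH in \<open>simp add: myE_snoc dK_def; simp add: field_simps\<close>)+
qed

lemma serreE2:
  "myE (i+1) (myE (i+1) (myE i x)) u - (vq + inverse vq) * myE (i+1) (myE i (myE (i+1) x)) u
     + myE i (myE (i+1) (myE (i+1) x)) u = 0"
proof (induction u arbitrary: x rule: rev_induct)
  case Nil
  then show ?case by simp
next
  case (snoc b u)
  note IH = solve3[OF snoc[of "\<lambda>w. x (w @ [b])"]]
  consider "b = i" | "b = i + 1" | "b = i + 2" | "b \<noteq> i" "b \<noteq> i + 1" "b \<noteq> i + 2" by blast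
  then show ?case
    by cases (use IH in \<open>simp add: myE_snoc dK_def; simp add: field_simps\<close>)+
qed


lemma serreF1:
  "myF i (myF i (myF (i+1) x)) u - (vq + inverse vq) * myF i (myF (i+1) (myF i x)) u
     + myF (i+1) (myF i (myF i x)) u = 0"
proof (induction u arbitrary: x rule: rev_induct)
  case Nil
  then show ?case by simp
next
  case (snoc b u)
  note IH = solve3[OF snoc[of "\<lambda>w. x (w @ [b])"]]
  consider "b = i" | "b = i + 1" | "b = i + 2" | "b \<noteq> i" "b \<noteq> i + 1" "b \<noteq> i + 2" by blast
  then show ?case
  proof cases
    case 1 then show ?thesis using IH apply (simp add: myF_snoc dK_def) done
  next
    case 2 then show ?thesis using IH apply (simp add: myF_snoc dK_def) apply (simp add: field_simps power_int_minus) by (simp add: eval_nat_numeral mult_ac)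
  next
    case 3 then show ?thesis using IH by (simp add: myF_snoc dK_def; (simp add: field_simps power_int_minus)?; (simp add: eval_nat_numeral mult_ac)?)
  next
    case 4 then show ?thesis using IH by (simp add: myF_snoc dK_def; (simp add: field_simps power_int_minus)?; (simp add: eval_nat_numeral mult_ac)?)
  qed
qed

lemma serreF2:
  "myF (i+1) (myF (i+1) (myF i x)) u - (vq + inverse vq) * myF (i+1) (myF i (myF (i+1) x)) u
     + myF i (myF (i+1) (myF (i+1) x)) u = 0"
proof (induction u arbitrary: x rule: rev_induct)
  case Nil
  then show ?case by simp
next
  case (snoc b u)
  note IH = solve3[OF snoc[of "\<lambda>w. x (w @ [b])"]]
  consider "b = i" | "b = i + 1" | "b = i + 2" | "b \<noteq> i" "b \<noteq> i + 1" "b \<noteq> i + 2" by blast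
  then show ?case
    by cases (use IH in \<open>simp add: myF_snoc dK_def; (simp add: field_simps power_int_minus)?; (simp add: eval_nat_numeral mult_ac)?\<close>)+
qed

lemma vq_sq: "vq * vq \<noteq> 1"
proof -
  have "[:0, 0, 1::rat:] \<noteq> 1"
  proof
    assume "[:0, 0, 1::rat:] = 1"
    then have "coeff [:0, 0, 1::rat:] 2 = coeff 1 2" by simp
    then show False by (simp add: numeral_2_eq_2)
  qed
  then show ?thesis by (simp add: vq_def One_fract_def eq_fract)
qed

lemma vq_diff_nz[simp]: "vq - inverse vq \<noteq> 0"
proof
  assume "vq - inverse vq = 0"
  then have "vq * vq = inverse vq * vq" by simp
  then show False using vq_sq by simp
qed

lemma EE_comm:
  assumes "\<bar>i - j\<bar> > 1"
  shows "myE i (myE j x) u = myE j (myE i x) u"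
proof (induction u arbitrary: x rule: rev_induct)
  case Nil
  then show ?case by simp
next
  case (snoc b u)
  note IH = snoc[of "\<lambda>w. x (w @ [_])"]
  have n: "i \<noteq> j" "i \<noteq> j + 1" "j \<noteq> i + 1" using assms by auto
  show ?case using IH n by (simp add: myE_snoc dK_def; (simp add: field_simps)?)
qed

lemma FF_comm:
  assumes "\<bar>i - j\<bar> > 1"
  shows "myF i (myF j x) u = myF j (myF i x) u"
proof (induction u arbitrary: x rule: rev_induct)
  case Nil
  then show ?case by simp
next
  case (snoc b u)
  note IH = snoc[of "\<lambda>w. x (w @ [_])"]
  have n: "i \<noteq> j" "i \<noteq> j + 1" "j \<noteq> i + 1" using assms by auto
  show ?case using IH n by (simp add: myF_snoc dK_def; (simp add: field_simps)?)
qed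

lemma EF_comm:
  assumes "i \<noteq> j"
  shows "myE i (myF j x) u = myF j (myE i x) u"
proof (induction u arbitrary: x rule: rev_induct)
  case Nil
  then show ?case by simp
next
  case (snoc b u)
  note IH = snoc[of "\<lambda>w. x (w @ [_])"]
  show ?case using IH assms by (simp add: myE_snoc myF_snoc dK_def; (simp add: field_simps)?)
qed

definition cq :: K where "cq = vq - inverse vq"
lemma cq_nz[simp]: "cq \<noteq> 0" unfolding cq_def by (rule vq_diff_nz)

lemma EF_same:
  "myE i (myF i x) u = myF i (myE i x) u
     + inverse cq * ((vq powi kt i u - inverse (vq powi kt i u)) * x u)"
proof (induction u arbitrary: x rule: rev_induct)
  case Nil
  then show ?case by simp
next
  case (snoc b u)
  note IH = snoc[of "\<lambda>w. x (w @ [b])"]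
  consider "b = i" | "b = i + 1" | "b \<noteq> i" "b \<noteq> i + 1" by blast
  then show ?case
  proof cases
    case 1 then show ?thesis using IH by (simp add: myE_snoc myF_snoc dK_def power_int_add power_int_diff; (simp add: field_simps)?; (simp add: cq_def field_simps)?; (simp add: eval_nat_numeral mult_ac)?)
  next
    case 2 then show ?thesis using IH by (simp add: myE_snoc myF_snoc dK_def power_int_add power_int_diff; (simp add: field_simps)?; (simp add: cq_def field_simps)?; (simp add: eval_nat_numeral mult_ac)?)
  next
    case 3 then show ?thesis using IH by (simp add: myE_snoc myF_snoc dK_def power_int_add power_int_diff; (simp add: field_simps)?; (simp add: cq_def field_simps)?; (simp add: eval_nat_numeral mult_ac)?)
  qed
qed

lemma cnt_upd: "k < length u \<Longrightarrow> int (cnt c (u[k := y])) = int (cnt c u) - (if u ! k = c then 1 else 0) + (if y = c then 1 else 0)"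
proof (induction u arbitrary: k)
  case Nil then show ?case by simp
next
  case (Cons b u)
  have cc: "int (cnt c (b # v)) = (if b = c then 1 else 0) + int (cnt c v)" for v
    by (simp add: cnt_def)
  show ?case
  proof (cases k)
    case 0 then show ?thesis by (simp add: cc cnt_def)
  next
    case (Suc k')
    then have "k' < length u" using Cons.prems by simp
    from Cons.IH[OF this] Suc show ?thesis by (simp add: cc)
  qed
qed

lemma cnt_le: "cnt c u \<le> length u" unfolding cnt_def by simp

lemma kt_cnt: "kt i u = int (cnt i u) - int (cnt (i + 1) u)"
  by (induction u) (auto simp: kt_def cnt_def dK_def)

lemma KE_rel: "myK c (myE a x) u = vq powi ((if c = a then 1 else 0) - (if c = a + 1 then 1 else 0)) * myE a (myK c x) u"
proof -
  have "myE a (myK c x) u = myE a (\<lambda>w. vq powi (int (cnt c w)) * x w) u"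
    by (simp add: myK_def[abs_def])
  also have "\<dots> = vq powi (int (cnt c u) + ((if c = a + 1 then 1 else 0) - (if c = a then 1 else 0))) * myE a x u"
    by (rule myE_scal) (auto simp: cnt_upd)
  finally show ?thesis
    by (simp add: myK_def power_int_add power_int_diff field_simps split: if_splits)
qed

lemma KF_rel: "myK c (myF a x) u = vq powi ((if c = a + 1 then 1 else 0) - (if c = a then 1 else 0)) * myF a (myK c x) u"
proof -
  have "myF a (myK c x) u = myF a (\<lambda>w. vq powi (int (cnt c w)) * x w) u"
    by (simp add: myK_def[abs_def])
  also have "\<dots> = vq powi (int (cnt c u) + ((if c = a then 1 else 0) - (if c = a + 1 then 1 else 0))) * myF a x u"
    by (rule myF_scal) (auto simp: cnt_upd)
  finally show ?thesis
    by (simp add: myK_def power_int_add power_int_diff field_simps split: if_splits)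
qed

lemma myE_pow_zero: "cnt (a) u < n \<Longrightarrow> (myE a ^^ n) x u = 0"
proof (induction n arbitrary: u)
  case 0 then show ?case by simp
next
  case (Suc n)
  have z: "(myE a ^^ n) x (u[k := a + 1]) = 0" if "k < length u" "u ! k = a" for k
    using cnt_upd[of k u "a" "a + 1"] that Suc.prems Suc.IH by auto
  have "(myE a ^^ Suc n) x u = myE a ((myE a ^^ n) x) u" by simp
  also have "\<dots> = 0" unfolding myE_def[of a "(myE a ^^ n) x"]
    by (intro sum.neutral ballI) (simp add: z)
  finally show ?case .
qed

lemma myF_pow_zero: "cnt (a + 1) u < n \<Longrightarrow> (myF a ^^ n) x u = 0"
proof (induction n arbitrary: u)
  case 0 then show ?case by simp
next
  case (Suc n)
  have z: "(myF a ^^ n) x (u[k := a]) = 0" if "k < length u" "u ! k = a + 1" for k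
    using cnt_upd[of k u "a + 1" "a"] that Suc.prems Suc.IH by auto
  have "(myF a ^^ Suc n) x u = myF a ((myF a ^^ n) x) u" by simp
  also have "\<dots> = 0" unfolding myF_def[of a "(myF a ^^ n) x"]
    by (intro sum.neutral ballI) (simp add: z)
  finally show ?case .
qed

section \<open>Operators on Tsp\<close>

lemma zero_Tsp[simp]: "(\<lambda>_. 0) \<in> Tsp r" by (simp add: Tsp_def)

lemma Tsp_fin: "x \<in> Tsp r \<Longrightarrow> finite {w. x w \<noteq> 0}" by (simp add: Tsp_def)

lemma Tsp_len: "x \<in> Tsp r \<Longrightarrow> x w \<noteq> 0 \<Longrightarrow> length w = r" by (simp add: Tsp_def)

lemma Tsp_add[simp]: "x \<in> Tsp r \<Longrightarrow> y \<in> Tsp r \<Longrightarrow> (\<lambda>u. x u + y u) \<in> Tsp r"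
proof -
  assume x: "x \<in> Tsp r" and y: "y \<in> Tsp r"
  have "{w. x w + y w \<noteq> 0} \<subseteq> {w. x w \<noteq> 0} \<union> {w. y w \<noteq> 0}" by auto
  then show ?thesis using x y unfolding Tsp_def by (auto intro: finite_subset)
qed

lemma Tsp_smul[simp]: "x \<in> Tsp r \<Longrightarrow> (\<lambda>u. c * x u) \<in> Tsp r"
proof -
  assume x: "x \<in> Tsp r"
  have "{w. c * x w \<noteq> 0} \<subseteq> {w. x w \<noteq> 0}" by auto
  then show ?thesis using x unfolding Tsp_def by (auto intro: finite_subset)
qed

lemma Tsp_diag: "x \<in> Tsp r \<Longrightarrow> (\<lambda>u. f u * x u) \<in> Tsp r"
proof -
  assume x: "x \<in> Tsp r"
  have "{w. f w * x w \<noteq> 0} \<subseteq> {w. x w \<noteq> 0}" by auto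
  then show ?thesis using x unfolding Tsp_def by (auto intro: finite_subset)
qed

lemma myE_Tsp[simp]: "x \<in> Tsp r \<Longrightarrow> myE a x \<in> Tsp r"
proof -
  assume x: "x \<in> Tsp r"
  have sub: "{u. myE a x u \<noteq> 0} \<subseteq> (\<Union>k<r. (\<lambda>w. w[k := a]) ` {w. x w \<noteq> 0})"
  proof
    fix u assume "u \<in> {u. myE a x u \<noteq> 0}"
    then obtain k where k: "k < length u" "u ! k = a" "x (u[k := a + 1]) \<noteq> 0"
      unfolding myE_def by (auto elim!: sum.not_neutral_contains_not_neutral split: if_splits)
    then have "length u = r" using Tsp_len[OF x k(3)] by simp
    moreover have "u = (u[k := a + 1])[k := a]" using k by (metis list_update_id list_update_overwrite)
    ultimately show "u \<in> (\<Union>k<r. (\<lambda>w. w[k := a]) ` {w. x w \<noteq> 0})" using k by blast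
  qed
  have len: "myE a x u \<noteq> 0 \<Longrightarrow> length u = r" for u
  proof -
    assume "myE a x u \<noteq> 0"
    then obtain k where k: "k < length u" "u ! k = a" "x (u[k := a + 1]) \<noteq> 0"
      unfolding myE_def by (auto elim!: sum.not_neutral_contains_not_neutral split: if_splits)
    then show "length u = r" using Tsp_len[OF x k(3)] by simp
  qed
  show ?thesis unfolding Tsp_def using sub len Tsp_fin[OF x] by (auto intro: finite_subset)
qed

lemma myF_Tsp[simp]: "x \<in> Tsp r \<Longrightarrow> myF a x \<in> Tsp r"
proof -
  assume x: "x \<in> Tsp r"
  have sub: "{u. myF a x u \<noteq> 0} \<subseteq> (\<Union>k<r. (\<lambda>w. w[k := a + 1]) ` {w. x w \<noteq> 0})"
  proof
    fix u assume "u \<in> {u. myF a x u \<noteq> 0}"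
    then obtain k where k: "k < length u" "u ! k = a + 1" "x (u[k := a]) \<noteq> 0"
      unfolding myF_def by (auto elim!: sum.not_neutral_contains_not_neutral split: if_splits)
    then have "length u = r" using Tsp_len[OF x k(3)] by simp
    moreover have "u = (u[k := a])[k := a + 1]" using k by (metis list_update_id list_update_overwrite)
    ultimately show "u \<in> (\<Union>k<r. (\<lambda>w. w[k := a + 1]) ` {w. x w \<noteq> 0})" using k by blast
  qed
  have len: "myF a x u \<noteq> 0 \<Longrightarrow> length u = r" for u
  proof -
    assume "myF a x u \<noteq> 0"
    then obtain k where k: "k < length u" "u ! k = a + 1" "x (u[k := a]) \<noteq> 0"
      unfolding myF_def by (auto elim!: sum.not_neutral_contains_not_neutral split: if_splits)
    then show "length u = r" using Tsp_len[OF x k(3)] by simp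
  qed
  show ?thesis unfolding Tsp_def using sub len Tsp_fin[OF x] by (auto intro: finite_subset)
qed

lemma myK_Tsp[simp]: "x \<in> Tsp r \<Longrightarrow> myK a x \<in> Tsp r"
  unfolding myK_def[abs_def] by (rule Tsp_diag)
lemma myKi_Tsp[simp]: "x \<in> Tsp r \<Longrightarrow> myKi a x \<in> Tsp r"
  unfolding myKi_def[abs_def] by (rule Tsp_diag)

lemma zE_in[simp]: "x \<in> Tsp r \<Longrightarrow> zE r a x = myE a x"
  by (auto simp: zE_def restr_def linE[OF Tsp_fin])
lemma zF_in[simp]: "x \<in> Tsp r \<Longrightarrow> zF r a x = myF a x"
  by (auto simp: zF_def restr_def linF[OF Tsp_fin])
lemma zK_in[simp]: "x \<in> Tsp r \<Longrightarrow> zK r a x = myK a x"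
  by (auto simp: zK_def restr_def linK[OF Tsp_fin])
lemma zKi_in[simp]: "x \<in> Tsp r \<Longrightarrow> zKinv r a x = myKi a x"
  by (auto simp: zKinv_def restr_def linKi[OF Tsp_fin])
lemma id_in[simp]: "x \<in> Tsp r \<Longrightarrow> restr r id x = x"
  by (simp add: restr_def)

lemma zE_out[simp]: "x \<notin> Tsp r \<Longrightarrow> zE r a x = (\<lambda>_. 0)" by (simp add: zE_def restr_def)
lemma zF_out[simp]: "x \<notin> Tsp r \<Longrightarrow> zF r a x = (\<lambda>_. 0)" by (simp add: zF_def restr_def)
lemma zK_out[simp]: "x \<notin> Tsp r \<Longrightarrow> zK r a x = (\<lambda>_. 0)" by (simp add: zK_def restr_def)
lemma zKi_out[simp]: "x \<notin> Tsp r \<Longrightarrow> zKinv r a x = (\<lambda>_. 0)" by (simp add: zKinv_def restr_def)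
lemma id_out[simp]: "x \<notin> Tsp r \<Longrightarrow> restr r id x = (\<lambda>_. 0)" by (simp add: restr_def)

lemma myE_z[simp]: "myE a (\<lambda>_. 0) = (\<lambda>_. 0)" by (rule ext) simp
lemma myF_z[simp]: "myF a (\<lambda>_. 0) = (\<lambda>_. 0)" by (rule ext) simp
lemma myK_z[simp]: "myK a (\<lambda>_. 0) = (\<lambda>_. 0)" by (rule ext) (simp add: myK_def)
lemma myKi_z[simp]: "myKi a (\<lambda>_. 0) = (\<lambda>_. 0)" by (rule ext) (simp add: myKi_def)

lemma Ualg_props:
  assumes "A \<in> Ualg r"
  shows "(\<forall>x. x \<notin> Tsp r \<longrightarrow> A x = (\<lambda>_. 0)) \<and> (\<forall>x\<in>Tsp r. A x \<in> Tsp r) \<and> A (\<lambda>_. 0) = (\<lambda>_. 0)"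
  using assms
proof induction
  case one then show ?case by simp
next
  case (genE a) then show ?case by simp
next
  case (genF a) then show ?case by simp
next
  case (genK a) then show ?case by simp
next
  case (genKinv a) then show ?case by simp
next
  case (add A B) then show ?case by simp
next
  case (smul A c) then show ?case by simp
next
  case (comp A B)
  then show ?case by simp
qed

lemma Ualg_out: "A \<in> Ualg r \<Longrightarrow> x \<notin> Tsp r \<Longrightarrow> A x = (\<lambda>_. 0)"
  using Ualg_props by blast
lemma Ualg_Tsp: "A \<in> Ualg r \<Longrightarrow> x \<in> Tsp r \<Longrightarrow> A x \<in> Tsp r"
  using Ualg_props by blast

lemma Ualg_eqI:
  assumes "A \<in> Ualg r" "B \<in> Ualg r" "\<And>x u. x \<in> Tsp r \<Longrightarrow> A x u = B x u"
  shows "A = B"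
proof
  fix x show "A x = B x"
    by (cases "x \<in> Tsp r") (auto simp: Ualg_out[OF assms(1)] Ualg_out[OF assms(2)] assms(3))
qed

lemmas Ualg.intros[intro]

lemma vs_ax:
  assumes "vector_space sm"
  shows "sm a (x + y) = sm a x + sm a y" "sm (a + b) x = sm a x + sm b x"
    "sm a (sm b x) = sm (a * b) x" "sm 1 x = x"
  using assms unfolding vector_space_def by auto

lemma vs_zero_left: "vector_space sm \<Longrightarrow> sm 0 x = 0"
  using vs_ax(2)[of sm 0 0 x] by simp

lemma vs_zero_right: "vector_space sm \<Longrightarrow> sm a 0 = 0"
  using vs_ax(1)[of sm a 0 0] by simp

lemma vs_minus_one: "vector_space sm \<Longrightarrow> sm (-1) x = - x"
  using vs_ax(2)[of sm "-1" 1 x] vs_ax(4)[of sm x] vs_zero_left[of sm x]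
  by (simp add: eq_neg_iff_add_eq_0)

lemma vs_neg: "vector_space sm \<Longrightarrow> sm (- a) x = - sm a x"
  using vs_ax(2)[of sm "-a" a x] vs_zero_left[of sm x]
  by (simp add: eq_neg_iff_add_eq_0)

lemma vs_eq0: "vector_space sm \<Longrightarrow> sm a x = 0 \<Longrightarrow> a \<noteq> 0 \<Longrightarrow> x = 0"
  by (metis vs_ax(3,4) vs_zero_right field_class.field_inverse mult.commute)

lemma lin_add: "Vector_Spaces.linear s1 s2 f \<Longrightarrow> f (a + b) = f a + f b"
  unfolding Vector_Spaces.linear_def module_hom_def module_hom_axioms_def by blast

lemma lin_scale: "Vector_Spaces.linear s1 s2 f \<Longrightarrow> f (s1 c x) = s2 c (f x)"
  unfolding Vector_Spaces.linear_def module_hom_def module_hom_axioms_def by blast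

section \<open>Operator identities\<close>

lemma opI:
  assumes "\<And>x u. x \<in> Tsp r \<Longrightarrow> F x u = G x u" "\<And>x. x \<notin> Tsp r \<Longrightarrow> F x = G x"
  shows "F = G"
proof
  fix x show "F x = G x" by (cases "x \<in> Tsp r") (auto simp: assms)
qed

lemma KK_kt: "myK i (myKi (i + 1) x) u = vq powi kt i u * x u"
  by (simp add: myK_def myKi_def kt_cnt power_int_diff power_int_minus field_simps)
lemma KK_kt': "myK (i + 1) (myKi i x) u = inverse (vq powi kt i u) * x u"
  by (simp add: myK_def myKi_def kt_cnt power_int_diff power_int_minus field_simps)

lemma O_KK: "zK r i \<circ> zK r j = zK r j \<circ> zK r i"
  by (rule opI[where r=r]) (simp_all add: myK_def)

lemma O_KKi: "zK r i \<circ> zKinv r i = restr r id" "zKinv r i \<circ> zK r i = restr r id"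
  by (rule opI[where r=r]; simp add: myK_def myKi_def power_int_minus)+

lemma O_KE: "zK r i \<circ> zE r j = (\<lambda>x u. vq powi ((if i = j then 1 else 0) - (if i = j + 1 then 1 else 0)) * (zE r j \<circ> zK r i) x u)"
  by (rule opI[where r=r]) (simp_all add: KE_rel)

lemma O_KF: "zK r i \<circ> zF r j = (\<lambda>x u. vq powi ((if i = j + 1 then 1 else 0) - (if i = j then 1 else 0)) * (zF r j \<circ> zK r i) x u)"
  by (rule opI[where r=r]) (simp_all add: KF_rel)

lemma O_EE: "\<bar>i - j\<bar> > 1 \<Longrightarrow> zE r i \<circ> zE r j = zE r j \<circ> zE r i"
  by (rule opI[where r=r]) (simp_all add: EE_comm)

lemma O_FF: "\<bar>i - j\<bar> > 1 \<Longrightarrow> zF r i \<circ> zF r j = zF r j \<circ> zF r i"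
  by (rule opI[where r=r]) (simp_all add: FF_comm)

lemma O_EF: "i \<noteq> j \<Longrightarrow> zE r i \<circ> zF r j = zF r j \<circ> zE r i"
  by (rule opI[where r=r]) (simp_all add: EF_comm)

lemma O_EFs: "zE r i \<circ> zF r i = (\<lambda>x u. (zF r i \<circ> zE r i) x u + inverse cq *
   (\<lambda>x u. (zK r i \<circ> zKinv r (i + 1)) x u + (-1) * (zK r (i + 1) \<circ> zKinv r i) x u) x u)"
  apply (rule opI[where r=r])
   apply (simp add: EF_same KK_kt KK_kt')
   apply (simp add: algebra_simps)
  apply (simp add: fun_eq_iff)
  done

lemma O_SE1: "(\<lambda>x u. (\<lambda>x u. (zE r i \<circ> (zE r i \<circ> zE r (i + 1))) x u + (- (vq + inverse vq)) * (zE r i \<circ> (zE r (i + 1) \<circ> zE r i)) x u) x u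
   + (zE r (i + 1) \<circ> (zE r i \<circ> zE r i)) x u) = (\<lambda>x u. 0 * restr r id x u)"
  by (rule opI[where r=r]) (use serreE1[of i] in \<open>simp_all add: algebra_simps\<close>)

lemma O_SE2: "(\<lambda>x u. (\<lambda>x u. (zE r (i + 1) \<circ> (zE r (i + 1) \<circ> zE r i)) x u + (- (vq + inverse vq)) * (zE r (i + 1) \<circ> (zE r i \<circ> zE r (i + 1))) x u) x u
   + (zE r i \<circ> (zE r (i + 1) \<circ> zE r (i + 1))) x u) = (\<lambda>x u. 0 * restr r id x u)"
  by (rule opI[where r=r]) (use serreE2[of i] in \<open>simp_all add: algebra_simps\<close>)

lemma O_SF1: "(\<lambda>x u. (\<lambda>x u. (zF r i \<circ> (zF r i \<circ> zF r (i + 1))) x u + (- (vq + inverse vq)) * (zF r i \<circ> (zF r (i + 1) \<circ> zF r i)) x u) x u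
   + (zF r (i + 1) \<circ> (zF r i \<circ> zF r i)) x u) = (\<lambda>x u. 0 * restr r id x u)"
  by (rule opI[where r=r]) (use serreF1[of i] in \<open>simp_all add: algebra_simps\<close>)

lemma O_SF2: "(\<lambda>x u. (\<lambda>x u. (zF r (i + 1) \<circ> (zF r (i + 1) \<circ> zF r i)) x u + (- (vq + inverse vq)) * (zF r (i + 1) \<circ> (zF r i \<circ> zF r (i + 1))) x u) x u
   + (zF r i \<circ> (zF r (i + 1) \<circ> zF r (i + 1))) x u) = (\<lambda>x u. 0 * restr r id x u)"
  by (rule opI[where r=r]) (use serreF2[of i] in \<open>simp_all add: algebra_simps\<close>)

lemma Ualg_simps[simp]:
  "restr r id \<in> Ualg r" "zE r a \<in> Ualg r" "zF r a \<in> Ualg r" "zK r a \<in> Ualg r" "zKinv r a \<in> Ualg r"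
  "A \<in> Ualg r \<Longrightarrow> B \<in> Ualg r \<Longrightarrow> (\<lambda>x u. A x u + B x u) \<in> Ualg r"
  "A \<in> Ualg r \<Longrightarrow> (\<lambda>x u. c * A x u) \<in> Ualg r"
  "A \<in> Ualg r \<Longrightarrow> B \<in> Ualg r \<Longrightarrow> A \<circ> B \<in> Ualg r"
  by (auto intro: Ualg.intros)

lemma Ualg_zero[simp]: "(\<lambda>x u. 0) \<in> Ualg r"
  using Ualg.smul[of "restr r id" r 0] by (simp add: Ualg.one)

lemma Ualg_neg[simp]: "A \<in> Ualg r \<Longrightarrow> (\<lambda>x u. - A x u) \<in> Ualg r"
  using Ualg.smul[of A r "-1"] by simp

lemma Ualg_diff[simp]: "A \<in> Ualg r \<Longrightarrow> B \<in> Ualg r \<Longrightarrow> (\<lambda>x u. A x u - B x u) \<in> Ualg r"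
  using Ualg.add[of A r "\<lambda>x u. - B x u"] by simp

context
  fixes r :: nat and sm :: "K \<Rightarrow> 'm::ab_group_add \<Rightarrow> 'm" and rho :: "top \<Rightarrow> 'm \<Rightarrow> 'm"
  assumes U: "Umodule r sm rho"
begin

lemma U_vs: "vector_space sm" using U unfolding Umodule_def by blast
lemma U_lin: "A \<in> Ualg r \<Longrightarrow> Vector_Spaces.linear sm sm (rho A)" using U unfolding Umodule_def by blast
lemma U_id: "rho (restr r id) m = m" using U unfolding Umodule_def by simp
lemma U_add: "A \<in> Ualg r \<Longrightarrow> B \<in> Ualg r \<Longrightarrow> rho (\<lambda>x u. A x u + B x u) m = rho A m + rho B m"
  using U unfolding Umodule_def by simp
lemma U_smul: "A \<in> Ualg r \<Longrightarrow> rho (\<lambda>x u. c * A x u) m = sm c (rho A m)"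
  using U unfolding Umodule_def by simp
lemma U_comp: "A \<in> Ualg r \<Longrightarrow> B \<in> Ualg r \<Longrightarrow> rho (A \<circ> B) m = rho A (rho B m)"
  using U unfolding Umodule_def by simp
lemma U_zero: "rho (\<lambda>x u. 0 * restr r id x u) m = 0"
  using U_smul[of "restr r id" 0 m] vs_zero_left[OF U_vs] by simp

lemma U_diff: "A \<in> Ualg r \<Longrightarrow> B \<in> Ualg r \<Longrightarrow> rho (\<lambda>x u. A x u - B x u) m = rho A m - rho B m"
proof -
  assume a: "A \<in> Ualg r" "B \<in> Ualg r"
  have "(\<lambda>x u. A x u - B x u) = (\<lambda>x u. A x u + (\<lambda>x u. (-1) * B x u) x u)" by simp
  then have "rho (\<lambda>x u. A x u - B x u) m = rho A m + rho (\<lambda>x u. (-1) * B x u) m"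
    using U_add[of A "\<lambda>x u. (-1) * B x u" m] a by simp
  then show ?thesis using U_smul[of B "-1" m] a vs_minus_one[OF U_vs] by simp
qed

lemma U_serre:
  assumes "Xa \<in> Ualg r" "Xb \<in> Ualg r"
    and eq: "(\<lambda>x u. (\<lambda>x u. (Xa \<circ> (Xa \<circ> Xb)) x u + (- (vq + inverse vq)) * (Xa \<circ> (Xb \<circ> Xa)) x u) x u
   + (Xb \<circ> (Xa \<circ> Xa)) x u) = (\<lambda>x u. 0 * restr r id x u)"
  shows "rho Xa (rho Xa (rho Xb m)) - sm (vq + inverse vq) (rho Xa (rho Xb (rho Xa m))) + rho Xb (rho Xa (rho Xa m)) = 0"
proof -
  have "rho (\<lambda>x u. (\<lambda>x u. (Xa \<circ> (Xa \<circ> Xb)) x u + (- (vq + inverse vq)) * (Xa \<circ> (Xb \<circ> Xa)) x u) x u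
   + (Xb \<circ> (Xa \<circ> Xa)) x u) m = 0" using eq U_zero by (simp del: comp_apply)
  then show ?thesis using assms(1,2) vs_neg[OF U_vs, of "vq + inverse vq"]
    by (simp add: U_add U_smul U_comp del: comp_apply)
qed

lemma part1_uinf:
  "Uinf_module sm (\<lambda>i. rho (zE r i)) (\<lambda>i. rho (zF r i)) (\<lambda>i. rho (zK r i)) (\<lambda>i. rho (zKinv r i))"
  unfolding Uinf_module_def
proof (intro conjI allI impI)
  show "vector_space sm" by (rule U_vs)
next
  fix i
  show "Vector_Spaces.linear sm sm (rho (zE r i))" "Vector_Spaces.linear sm sm (rho (zF r i))"
    "Vector_Spaces.linear sm sm (rho (zK r i))" "Vector_Spaces.linear sm sm (rho (zKinv r i))"
    by (simp_all add: U_lin)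
next
  fix i j m
  show "rho (zK r i) (rho (zK r j) m) = rho (zK r j) (rho (zK r i) m)"
    using U_comp[of "zK r i" "zK r j" m] U_comp[of "zK r j" "zK r i" m] by (simp add: O_KK)
next
  fix i m
  show "rho (zK r i) (rho (zKinv r i) m) = m" "rho (zKinv r i) (rho (zK r i) m) = m"
    using U_comp[of "zK r i" "zKinv r i" m] U_comp[of "zKinv r i" "zK r i" m] by (simp_all add: O_KKi U_id)
next
  fix i j m
  show "rho (zK r i) (rho (zE r j) m) = sm (vq powi ((if i = j then 1 else 0) - (if i = j + 1 then 1 else 0))) (rho (zE r j) (rho (zK r i) m))"
    using U_comp[of "zK r i" "zE r j" m] U_comp[of "zE r j" "zK r i" m] by (simp add: O_KE U_smul del: comp_apply)
next
  fix i j m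
  show "rho (zK r i) (rho (zF r j) m) = sm (vq powi ((if i = j + 1 then 1 else 0) - (if i = j then 1 else 0))) (rho (zF r j) (rho (zK r i) m))"
    using U_comp[of "zK r i" "zF r j" m] U_comp[of "zF r j" "zK r i" m] by (simp add: O_KF U_smul del: comp_apply)
next
  fix i j :: int and m assume h: "1 < \<bar>i - j\<bar>"
  show "rho (zE r i) (rho (zE r j) m) = rho (zE r j) (rho (zE r i) m)"
    using U_comp[of "zE r i" "zE r j" m] U_comp[of "zE r j" "zE r i" m] by (simp add: O_EE[OF h])
  show "rho (zF r i) (rho (zF r j) m) = rho (zF r j) (rho (zF r i) m)"
    using U_comp[of "zF r i" "zF r j" m] U_comp[of "zF r j" "zF r i" m] by (simp add: O_FF[OF h])
next
  fix i j m
  show "rho (zE r i) (rho (zF r j) m) - rho (zF r j) (rho (zE r i) m) =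
       (if i = j then sm (inverse (vq - inverse vq)) (rho (zK r i) (rho (zKinv r (i + 1)) m) - rho (zK r (i + 1)) (rho (zKinv r i) m)) else 0)"
  proof (cases "i = j")
    case True
    have "rho (zE r i \<circ> zF r i) m = rho (zF r i \<circ> zE r i) m + sm (inverse cq)
      (rho (zK r i \<circ> zKinv r (i + 1)) m - rho (zK r (i + 1) \<circ> zKinv r i) m)"
      by (subst O_EFs) (simp add: U_add U_smul U_diff del: comp_apply)
    then show ?thesis using True by (simp add: U_comp cq_def)
  next
    case False
    then show ?thesis
      using U_comp[of "zE r i" "zF r j" m] U_comp[of "zF r j" "zE r i" m] by (simp add: O_EF)
  qed
next
  fix i j :: int and m assume h: "\<bar>i - j\<bar> = 1"
  then consider "j = i + 1" | "i = j + 1" by linarith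
  then show "rho (zE r i) (rho (zE r i) (rho (zE r j) m)) - sm (vq + inverse vq) (rho (zE r i) (rho (zE r j) (rho (zE r i) m))) + rho (zE r j) (rho (zE r i) (rho (zE r i) m)) = 0"
  proof cases
    case 1
    then show ?thesis using U_serre[OF _ _ O_SE1] by simp
  next
    case 2
    then show ?thesis using U_serre[OF _ _ O_SE2] by simp
  qed
next
  fix i j :: int and m assume h: "\<bar>i - j\<bar> = 1"
  then consider "j = i + 1" | "i = j + 1" by linarith
  then show "rho (zF r i) (rho (zF r i) (rho (zF r j) m)) - sm (vq + inverse vq) (rho (zF r i) (rho (zF r j) (rho (zF r i) m))) + rho (zF r j) (rho (zF r i) (rho (zF r i) m)) = 0"
  proof cases
    case 1
    then show ?thesis using U_serre[OF _ _ O_SF1] by simp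
  next
    case 2
    then show ?thesis using U_serre[OF _ _ O_SF2] by simp
  qed
qed

end


section \<open>Weights\<close>

lemma vq_pow: "vq ^ k = Fract ([:0, 1:] ^ k) 1"
  by (induction k) (simp_all add: vq_def One_fract_def)

lemma vq_pow_eq1: "vq ^ k = 1 \<Longrightarrow> k = 0"
proof -
  assume "vq ^ k = 1"
  then have "[:0, 1::rat:] ^ k = 1" by (simp add: vq_pow One_fract_def eq_fract)
  then have "degree ([:0, 1::rat:] ^ k) = 0" by simp
  then show "k = 0" by (simp add: degree_power_eq)
qed

lemma vq_powi_eq1_pos: "n \<ge> 0 \<Longrightarrow> vq powi n = 1 \<Longrightarrow> n = 0"
proof -
  assume "n \<ge> 0" "vq powi n = 1"
  then have "vq ^ nat n = 1" by (simp add: power_int_def)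
  then show ?thesis using vq_pow_eq1 \<open>n \<ge> 0\<close> by fastforce
qed

lemma vq_powi_eq1: "vq powi n = 1 \<Longrightarrow> n = 0"
proof (cases "n \<ge> 0")
  case True
  then show "vq powi n = 1 \<Longrightarrow> n = 0" using vq_powi_eq1_pos by blast
next
  case False
  assume h: "vq powi n = 1"
  have "vq powi (- n) = inverse (vq powi n)" by (simp add: power_int_minus)
  then have "vq powi (- n) = 1" using h by simp
  then show ?thesis using vq_powi_eq1_pos[of "- n"] False by simp
qed

lemma vq_powi_inj: "vq powi a = vq powi b \<Longrightarrow> a = b"
proof -
  assume "vq powi a = vq powi b"
  then have "vq powi (a - b) = 1" by (simp add: power_int_diff)
  then show "a = b" using vq_powi_eq1 by fastforce
qed

definition Pop :: "nat \<Rightarrow> (int \<times> K) list \<Rightarrow> top" where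
  "Pop r ps = foldr (\<lambda>(i, c) A. (\<lambda>x u. zK r i x u + (- c) * restr r id x u) \<circ> A) ps (restr r id)"

lemma Pop_Nil[simp]: "Pop r [] = restr r id" by (simp add: Pop_def)
lemma Pop_Cons[simp]: "Pop r ((i, c) # ps) = (\<lambda>x u. zK r i x u + (- c) * restr r id x u) \<circ> Pop r ps"
  by (simp add: Pop_def)

lemma Pop_Ualg[simp]: "Pop r ps \<in> Ualg r"
  by (induction ps) auto

lemma Pop_val: "x \<in> Tsp r \<Longrightarrow> Pop r ps x u = (\<Prod>(i, c)\<leftarrow>ps. vq powi int (cnt i u) - c) * x u"
proof (induction ps arbitrary: u)
  case Nil then show ?case by simp
next
  case (Cons p ps)
  obtain i c where p: "p = (i, c)" by fastforce
  have T: "Pop r ps x \<in> Tsp r" using Ualg_Tsp[OF Pop_Ualg Cons.prems] .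
  show ?case using Cons T by (simp add: p myK_def algebra_simps)
qed

lemma Pop_zero:
  assumes "\<And>u. length u = r \<Longrightarrow> \<exists>(i, c)\<in>set ps. vq powi int (cnt i u) = c"
  shows "Pop r ps = (\<lambda>x u. 0 * restr r id x u)"
proof (rule Ualg_eqI[where r=r])
  show "(\<lambda>x u. 0 * restr r id x u) \<in> Ualg r" by simp
  fix x u assume x: "x \<in> Tsp r"
  show "Pop r ps x u = 0 * restr r id x u"
  proof (cases "x u = 0")
    case True then show ?thesis using x by (simp add: Pop_val)
  next
    case False
    then have "length u = r" using Tsp_len[OF x] by blast
    then obtain i c where "(i, c) \<in> set ps" "vq powi int (cnt i u) = c" using assms by blast
    then have "(\<Prod>(i, c)\<leftarrow>ps. vq powi int (cnt i u) - c) = 0"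
      by (force simp: prod_list_zero_iff)
    then show ?thesis using x by (simp add: Pop_val)
  qed
qed simp

context
  fixes r :: nat and sm :: "K \<Rightarrow> 'm::ab_group_add \<Rightarrow> 'm" and rho :: "top \<Rightarrow> 'm \<Rightarrow> 'm"
  assumes U: "Umodule r sm rho"
begin

lemma Pop_rho:
  assumes m: "m \<in> weight_space sm (\<lambda>i. rho (zK r i)) lam"
  shows "rho (Pop r ps) m = sm (\<Prod>(i, c)\<leftarrow>ps. vq powi lam i - c) m"
proof (induction ps)
  case Nil then show ?case by (simp add: U_id[OF U] vs_ax(4)[OF U_vs[OF U]])
next
  case (Cons p ps)
  obtain i c where p: "p = (i, c)" by fastforce
  let ?P = "\<Prod>(i, c)\<leftarrow>ps. vq powi lam i - c"
  have vs: "vector_space sm" by (rule U_vs[OF U])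
  have K: "rho (zK r i) m = sm (vq powi lam i) m" using m by (simp add: weight_space_def)
  have "rho (Pop r (p # ps)) m = rho (\<lambda>x u. zK r i x u + (- c) * restr r id x u) (sm ?P m)"
    by (simp add: p U_comp[OF U] Cons del: comp_apply)
  also have "\<dots> = rho (zK r i) (sm ?P m) + sm (- c) (sm ?P m)"
    by (simp add: U_diff[OF U] U_smul[OF U] U_id[OF U] vs_neg[OF U_vs[OF U]] del: comp_apply)
  also have "rho (zK r i) (sm ?P m) = sm ?P (sm (vq powi lam i) m)"
    using lin_scale[OF U_lin[OF U, of "zK r i"]] K by simp
  finally show ?case using vs
    by (simp add: p vs_ax(3)[OF vs] vs_ax(2)[OF vs, symmetric] algebra_simps)
qed

lemma weight_nonzero:
  assumes m: "m \<in> weight_space sm (\<lambda>i. rho (zK r i)) lam" and nz: "m \<noteq> 0"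
    and Z: "\<And>u. length u = r \<Longrightarrow> \<exists>(i, c)\<in>set ps. vq powi int (cnt i u) = c"
  shows "\<exists>(i, c)\<in>set ps. vq powi lam i = c"
proof -
  have "rho (Pop r ps) m = 0" using Pop_zero[OF Z] U_zero[OF U] by simp
  then have "sm (\<Prod>(i, c)\<leftarrow>ps. vq powi lam i - c) m = 0" using Pop_rho[OF m] by simp
  then have "(\<Prod>(i, c)\<leftarrow>ps. vq powi lam i - c) = 0" using vs_eq0[OF U_vs[OF U]] nz by blast
  then show ?thesis by (force simp: prod_list_zero_iff)
qed

end


lemma Ualg_pow: "A \<in> Ualg r \<Longrightarrow> A ^^ Suc n \<in> Ualg r"
proof (induction n)
  case 0 then show ?case by simp
next
  case (Suc n)
  have e: "A ^^ Suc (Suc n) = A \<circ> A ^^ Suc n" by (simp only: funpow.simps(2))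
  have "A \<circ> A ^^ Suc n \<in> Ualg r" by (rule Ualg.comp[OF Suc.prems Suc.IH[OF Suc.prems]])
  then show ?case by (simp only: e)
qed

lemma zE_pow_in: "x \<in> Tsp r \<Longrightarrow> (zE r a ^^ n) x = (myE a ^^ n) x \<and> (myE a ^^ n) x \<in> Tsp r"
  by (induction n) auto
lemma zF_pow_in: "x \<in> Tsp r \<Longrightarrow> (zF r a ^^ n) x = (myF a ^^ n) x \<and> (myF a ^^ n) x \<in> Tsp r"
  by (induction n) auto

lemma zE_pow_zero: "r < n \<Longrightarrow> zE r a ^^ n = (\<lambda>x u. 0)"
proof -
  assume n: "r < n"
  then obtain k where k: "n = Suc k" by (cases n) auto
  show ?thesis
  proof (rule Ualg_eqI[where r=r])
    show "zE r a ^^ n \<in> Ualg r" unfolding k by (rule Ualg_pow) simp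
    show "(\<lambda>x u. 0) \<in> Ualg r" by simp
    fix x u assume x: "x \<in> Tsp r"
    show "(zE r a ^^ n) x u = 0"
    proof (cases "length u = r")
      case True
      then have "cnt a u < n" using cnt_le[of a u] n by simp
      then show ?thesis using zE_pow_in[OF x] myE_pow_zero by simp
    next
      case False
      then show ?thesis using zE_pow_in[OF x, where a=a and n=n] Tsp_len by metis
    qed
  qed
qed

lemma zF_pow_zero: "r < n \<Longrightarrow> zF r a ^^ n = (\<lambda>x u. 0)"
proof -
  assume n: "r < n"
  then obtain k where k: "n = Suc k" by (cases n) auto
  show ?thesis
  proof (rule Ualg_eqI[where r=r])
    show "zF r a ^^ n \<in> Ualg r" unfolding k by (rule Ualg_pow) simp
    show "(\<lambda>x u. 0) \<in> Ualg r" by simp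
    fix x u assume x: "x \<in> Tsp r"
    show "(zF r a ^^ n) x u = 0"
    proof (cases "length u = r")
      case True
      then have "cnt (a + 1) u < n" using cnt_le[of "a + 1" u] n by simp
      then show ?thesis using zF_pow_in[OF x] myF_pow_zero by simp
    next
      case False
      then show ?thesis using zF_pow_in[OF x, where a=a and n=n] Tsp_len by metis
    qed
  qed
qed

context
  fixes r :: nat and sm :: "K \<Rightarrow> 'm::ab_group_add \<Rightarrow> 'm" and rho :: "top \<Rightarrow> 'm \<Rightarrow> 'm"
  assumes U: "Umodule r sm rho"
begin

lemma U_pow: "A \<in> Ualg r \<Longrightarrow> (rho A ^^ Suc n) m = rho (A ^^ Suc n) m"
proof (induction n)
  case 0 then show ?case by simp
next
  case (Suc n)
  have "(rho A ^^ Suc (Suc n)) m = rho A ((rho A ^^ Suc n) m)" by (simp only: funpow.simps(2) o_apply)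
  also have "\<dots> = rho A (rho (A ^^ Suc n) m)" using Suc by (simp del: funpow.simps)
  also have "\<dots> = rho (A \<circ> A ^^ Suc n) m" using U_comp[OF U, of A "A ^^ Suc n" m] Suc.prems Ualg_pow
    by (simp del: funpow.simps)
  finally show ?case by (simp only: funpow.simps(2))
qed

lemma rho_zero_op: "rho (\<lambda>x u. 0) m = 0"
  using U_zero[OF U, of m] by simp

lemma part1_Cint:
  assumes W: "weight_module sm (\<lambda>i. rho (zK r i))"
  shows "Cint sm (\<lambda>i. rho (zE r i)) (\<lambda>i. rho (zF r i)) (\<lambda>i. rho (zK r i))"
  unfolding Cint_def
proof (intro conjI allI)
  show "weight_module sm (\<lambda>i. rho (zK r i))" by (rule W)
  fix m i
  show "\<exists>N. \<forall>n\<ge>N. (rho (zE r i) ^^ n) m = 0 \<and> (rho (zF r i) ^^ n) m = 0"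
  proof (intro exI allI impI)
    fix n assume n: "Suc r \<le> n"
    then obtain k where k: "n = Suc k" by (cases n) auto
    show "(rho (zE r i) ^^ n) m = 0 \<and> (rho (zF r i) ^^ n) m = 0"
      using U_pow[of "zE r i" k m] U_pow[of "zF r i" k m] zE_pow_zero[of r n i] zF_pow_zero[of r n i] n k
      by (simp add: rho_zero_op del: funpow.simps)
  qed
qed

lemma part1_Cpol:
  assumes W: "weight_module sm (\<lambda>i. rho (zK r i))"
  shows "Cpol sm (\<lambda>i. rho (zK r i))"
  unfolding Cpol_def
proof (intro conjI[OF W] allI impI)
  fix lam assume "\<exists>m\<in>weight_space sm (\<lambda>i. rho (zK r i)) lam. m \<noteq> 0"
  then obtain m where m: "m \<in> weight_space sm (\<lambda>i. rho (zK r i)) lam" and nz: "m \<noteq> 0" by blast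
  have "\<forall>i. 0 \<le> lam i"
  proof
    fix i :: int
    let ?ps = "map (\<lambda>k. (i, vq ^ k)) [0..<Suc r]"
    have Z: "\<exists>(j, c)\<in>set ?ps. vq powi int (cnt j u) = c" if "length u = r" for u
      using cnt_le[of i u] that by (force)
    obtain j c where "(j, c) \<in> set ?ps" "vq powi lam j = c"
      using weight_nonzero[OF U m nz Z] by blast
    then obtain k where "vq powi lam i = vq powi int k" by auto
    then have "lam i = int k" by (rule vq_powi_inj)
    then show "0 \<le> lam i" by simp
  qed
  moreover have "finite {i. lam i \<noteq> 0}"
  proof (rule ccontr)
    assume inf: "infinite {i. lam i \<noteq> 0}"
    then obtain S where S: "finite S" "card S = Suc r" "S \<subseteq> {i. lam i \<noteq> 0}"
      using infinite_arbitrarily_large by blast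
    let ?ps = "map (\<lambda>i. (i, 1::K)) (sorted_list_of_set S)"
    have Z: "\<exists>(j, c)\<in>set ?ps. vq powi int (cnt j u) = c" if "length u = r" for u
    proof -
      have "\<exists>i\<in>S. i \<notin> set u"
      proof (rule ccontr)
        assume "\<not> (\<exists>i\<in>S. i \<notin> set u)"
        then have "S \<subseteq> set u" by blast
        then have "card S \<le> card (set u)" by (simp add: card_mono)
        also have "\<dots> \<le> length u" by (rule card_length)
        finally show False using S that by simp
      qed
      then obtain i where "i \<in> S" "i \<notin> set u" by blast
      then have "cnt i u = 0" by (auto simp: cnt_def filter_empty_conv)
      then show ?thesis using \<open>i \<in> S\<close> S(1) by force
    qed
    obtain j c where "(j, c) \<in> set ?ps" "vq powi lam j = c"
      using weight_nonzero[OF U m nz Z] by blast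
    then have "j \<in> S" "vq powi lam j = vq powi 0" using S(1) by auto
    then show False using vq_powi_inj S(3) by blast
  qed
  ultimately show "finite {i. lam i \<noteq> 0} \<and> (\<forall>i. 0 \<le> lam i)" by blast
qed

end


section \<open>Morphisms\<close>

lemma part2:
  fixes smM :: "K \<Rightarrow> 'm::ab_group_add \<Rightarrow> 'm" and smN :: "K \<Rightarrow> 'n::ab_group_add \<Rightarrow> 'n"
  assumes UM: "Umodule r smM rhoM" and UN: "Umodule r smN rhoN" and f: "Vector_Spaces.linear smM smN f"
  shows "(\<forall>A\<in>Ualg r. \<forall>m. f (rhoM A m) = rhoN A (f m)) \<longleftrightarrow>
         (\<forall>i m. f (rhoM (zE r i) m) = rhoN (zE r i) (f m) \<and> f (rhoM (zF r i) m) = rhoN (zF r i) (f m)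
              \<and> f (rhoM (zK r i) m) = rhoN (zK r i) (f m) \<and> f (rhoM (zKinv r i) m) = rhoN (zKinv r i) (f m))"
proof
  assume "\<forall>A\<in>Ualg r. \<forall>m. f (rhoM A m) = rhoN A (f m)"
  then show "\<forall>i m. f (rhoM (zE r i) m) = rhoN (zE r i) (f m) \<and> f (rhoM (zF r i) m) = rhoN (zF r i) (f m)
              \<and> f (rhoM (zK r i) m) = rhoN (zK r i) (f m) \<and> f (rhoM (zKinv r i) m) = rhoN (zKinv r i) (f m)"
    by simp
next
  assume g: "\<forall>i m. f (rhoM (zE r i) m) = rhoN (zE r i) (f m) \<and> f (rhoM (zF r i) m) = rhoN (zF r i) (f m)
              \<and> f (rhoM (zK r i) m) = rhoN (zK r i) (f m) \<and> f (rhoM (zKinv r i) m) = rhoN (zKinv r i) (f m)"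
  show "\<forall>A\<in>Ualg r. \<forall>m. f (rhoM A m) = rhoN A (f m)"
  proof
    fix A assume "A \<in> Ualg r"
    then show "\<forall>m. f (rhoM A m) = rhoN A (f m)"
    proof induction
      case one then show ?case by (simp add: U_id[OF UM] U_id[OF UN])
    next
      case (genE a) then show ?case using g by simp
    next
      case (genF a) then show ?case using g by simp
    next
      case (genK a) then show ?case using g by simp
    next
      case (genKinv a) then show ?case using g by simp
    next
      case (add A B) then show ?case by (simp add: U_add[OF UM] U_add[OF UN] lin_add[OF f])
    next
      case (smul A c) then show ?case by (simp add: U_smul[OF UM] U_smul[OF UN] lin_scale[OF f])
    next
      case (comp A B) then show ?case by (simp add: U_comp[OF UM] U_comp[OF UN] del: comp_apply)
    qed
  qed
qed

section \<open>The homomorphism U(infinity, r+1) -> U(infinity, r)\<close>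

definition tens :: "tvec \<Rightarrow> int \<Rightarrow> tvec" where
  "tens y c u = (if u = [] then 0 else if last u = c then y (butlast u) else 0)"

lemma tens_snoc[simp]: "tens y c (u @ [b]) = (if b = c then y u else 0)"
  by (simp add: tens_def)
lemma tens_Nil[simp]: "tens y c [] = 0"
  by (simp add: tens_def)

lemma tens_Tsp[simp]: "y \<in> Tsp r \<Longrightarrow> tens y c \<in> Tsp (Suc r)"
proof -
  assume y: "y \<in> Tsp r"
  have sub: "{u. tens y c u \<noteq> 0} \<subseteq> (\<lambda>w. w @ [c]) ` {w. y w \<noteq> 0}"
  proof
    fix u assume "u \<in> {u. tens y c u \<noteq> 0}"
    then show "u \<in> (\<lambda>w. w @ [c]) ` {w. y w \<noteq> 0}"
      by (cases u rule: rev_cases) (auto split: if_splits)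
  qed
  have len: "tens y c u \<noteq> 0 \<Longrightarrow> length u = Suc r" for u
    using Tsp_len[OF y] by (cases u rule: rev_cases) (auto split: if_splits)
  show ?thesis unfolding Tsp_def using sub len Tsp_fin[OF y] by (auto intro: finite_subset)
qed

lemma tens_ext: "(\<And>u b. F (u @ [b]) = G (u @ [b])) \<Longrightarrow> F [] = G [] \<Longrightarrow> F = G"
proof
  fix u assume "\<And>u b. F (u @ [b]) = G (u @ [b])" "F [] = G []"
  then show "F u = G u" by (cases u rule: rev_cases) auto
qed

lemma myE_tens: "c \<noteq> a \<Longrightarrow> c \<noteq> a + 1 \<Longrightarrow> myE a (tens y c) = tens (myE a y) c"
  by (rule tens_ext) (auto simp: myE_snoc dK_def)

lemma myF_tens: "c \<noteq> a \<Longrightarrow> myF a (tens y c) = tens (myF a y) c"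
  by (rule tens_ext) (auto simp: myF_snoc)

lemma cnt_snoc[simp]: "cnt a (u @ [b]) = cnt a u + (if b = a then 1 else 0)"
  by (simp add: cnt_def)

lemma myK_tens: "c \<noteq> a \<Longrightarrow> myK a (tens y c) = tens (myK a y) c"
  by (rule tens_ext) (auto simp: myK_def)

lemma myKi_tens: "c \<noteq> a \<Longrightarrow> myKi a (tens y c) = tens (myKi a y) c"
  by (rule tens_ext) (auto simp: myKi_def)

definition Rel :: "nat \<Rightarrow> top \<Rightarrow> top \<Rightarrow> bool" where
  "Rel r A A' \<longleftrightarrow> A' \<in> Ualg r \<and> (\<exists>N. \<forall>c\<ge>N. \<forall>y\<in>Tsp r. A (tens y c) = tens (A' y) c)"

lemma Rel_one: "Rel r (restr (Suc r) id) (restr r id)"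
  unfolding Rel_def by auto

lemma Rel_E: "Rel r (zE (Suc r) a) (zE r a)"
  unfolding Rel_def by (auto intro!: exI[of _ "a + 2"] simp: myE_tens)
lemma Rel_F: "Rel r (zF (Suc r) a) (zF r a)"
  unfolding Rel_def by (auto intro!: exI[of _ "a + 1"] simp: myF_tens)
lemma Rel_K: "Rel r (zK (Suc r) a) (zK r a)"
  unfolding Rel_def by (auto intro!: exI[of _ "a + 1"] simp: myK_tens)
lemma Rel_Ki: "Rel r (zKinv (Suc r) a) (zKinv r a)"
  unfolding Rel_def by (auto intro!: exI[of _ "a + 1"] simp: myKi_tens)

lemma Rel_add: "Rel r A A' \<Longrightarrow> Rel r B B' \<Longrightarrow> Rel r (\<lambda>x u. A x u + B x u) (\<lambda>x u. A' x u + B' x u)"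
proof -
  assume a: "Rel r A A'" and b: "Rel r B B'"
  then obtain N1 N2 where n1: "\<forall>c\<ge>N1. \<forall>y\<in>Tsp r. A (tens y c) = tens (A' y) c"
    and n2: "\<forall>c\<ge>N2. \<forall>y\<in>Tsp r. B (tens y c) = tens (B' y) c" unfolding Rel_def by blast
  have "\<forall>c\<ge>max N1 N2. \<forall>y\<in>Tsp r. (\<lambda>u. A (tens y c) u + B (tens y c) u) = tens (\<lambda>u. A' y u + B' y u) c"
  proof (intro allI impI ballI)
    fix c y assume "max N1 N2 \<le> c" "y \<in> Tsp r"
    then show "(\<lambda>u. A (tens y c) u + B (tens y c) u) = tens (\<lambda>u. A' y u + B' y u) c"
      using n1 n2 by (intro tens_ext) auto
  qed
  then show ?thesis using a b unfolding Rel_def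
    by (intro conjI exI[of _ "max N1 N2"]) (auto simp del: max.bounded_iff)
qed

lemma Rel_smul: "Rel r A A' \<Longrightarrow> Rel r (\<lambda>x u. c * A x u) (\<lambda>x u. c * A' x u)"
proof -
  assume a: "Rel r A A'"
  then obtain N1 where n1: "\<forall>c\<ge>N1. \<forall>y\<in>Tsp r. A (tens y c) = tens (A' y) c" unfolding Rel_def by blast
  have "\<forall>d\<ge>N1. \<forall>y\<in>Tsp r. (\<lambda>u. c * A (tens y d) u) = tens (\<lambda>u. c * A' y u) d"
  proof (intro allI impI ballI)
    fix d y assume "N1 \<le> d" "y \<in> Tsp r"
    then show "(\<lambda>u. c * A (tens y d) u) = tens (\<lambda>u. c * A' y u) d"
      using n1 by (intro tens_ext) auto
  qed
  then show ?thesis using a unfolding Rel_def by auto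
qed

lemma Rel_comp: "Rel r A A' \<Longrightarrow> Rel r B B' \<Longrightarrow> Rel r (A \<circ> B) (A' \<circ> B')"
proof -
  assume a: "Rel r A A'" and b: "Rel r B B'"
  then obtain N1 N2 where n1: "\<forall>c\<ge>N1. \<forall>y\<in>Tsp r. A (tens y c) = tens (A' y) c"
    and n2: "\<forall>c\<ge>N2. \<forall>y\<in>Tsp r. B (tens y c) = tens (B' y) c" unfolding Rel_def by blast
  have B': "B' \<in> Ualg r" using b unfolding Rel_def by blast
  have "\<forall>c\<ge>max N1 N2. \<forall>y\<in>Tsp r. A (B (tens y c)) = tens (A' (B' y)) c"
    using n1 n2 Ualg_Tsp[OF B'] by simp
  then show ?thesis using a b unfolding Rel_def
    by (intro conjI exI[of _ "max N1 N2"]) (auto simp del: max.bounded_iff)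
qed

lemma Rel_ex: "A \<in> Ualg (Suc r) \<Longrightarrow> \<exists>A'. Rel r A A'"
proof (induction rule: Ualg.induct)
  case one then show ?case using Rel_one by blast
next
  case (genE a) then show ?case using Rel_E by blast
next
  case (genF a) then show ?case using Rel_F by blast
next
  case (genK a) then show ?case using Rel_K by blast
next
  case (genKinv a) then show ?case using Rel_Ki by blast
next
  case (add A B) then show ?case using Rel_add by blast
next
  case (smul A c) then show ?case using Rel_smul by blast
next
  case (comp A B) then show ?case using Rel_comp by blast
qed

lemma Rel_uniq: "Rel r A A1 \<Longrightarrow> Rel r A A2 \<Longrightarrow> A1 = A2"
proof -
  assume a: "Rel r A A1" and b: "Rel r A A2"
  then obtain N1 N2 where n1: "\<forall>c\<ge>N1. \<forall>y\<in>Tsp r. A (tens y c) = tens (A1 y) c"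
    and n2: "\<forall>c\<ge>N2. \<forall>y\<in>Tsp r. A (tens y c) = tens (A2 y) c" unfolding Rel_def by blast
  show "A1 = A2"
  proof (rule Ualg_eqI[where r=r])
    show "A1 \<in> Ualg r" "A2 \<in> Ualg r" using a b unfolding Rel_def by blast+
    fix x u assume x: "x \<in> Tsp r"
    have "tens (A1 x) (max N1 N2) = tens (A2 x) (max N1 N2)" using n1 n2 x by (metis max.cobounded1 max.cobounded2)
    then have "tens (A1 x) (max N1 N2) (u @ [max N1 N2]) = tens (A2 x) (max N1 N2) (u @ [max N1 N2])" by simp
    then show "A1 x u = A2 x u" by simp
  qed
qed

definition phi0 :: "nat \<Rightarrow> top \<Rightarrow> top" where
  "phi0 r A = (SOME A'. Rel r A A')"

lemma phi0_Rel: "A \<in> Ualg (Suc r) \<Longrightarrow> Rel r A (phi0 r A)"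
  unfolding phi0_def using Rel_ex by (metis someI_ex)

lemma phi0_eq: "A \<in> Ualg (Suc r) \<Longrightarrow> Rel r A A' \<Longrightarrow> phi0 r A = A'"
  using phi0_Rel Rel_uniq by blast

lemma phi0_Ualg: "A \<in> Ualg (Suc r) \<Longrightarrow> phi0 r A \<in> Ualg r"
  using phi0_Rel unfolding Rel_def by blast

lemma phi0_add: "A \<in> Ualg (Suc r) \<Longrightarrow> B \<in> Ualg (Suc r) \<Longrightarrow> phi0 r (\<lambda>x u. A x u + B x u) = (\<lambda>x u. phi0 r A x u + phi0 r B x u)"
  by (rule phi0_eq[OF Ualg.add Rel_add[OF phi0_Rel phi0_Rel]])
lemma phi0_smul: "A \<in> Ualg (Suc r) \<Longrightarrow> phi0 r (\<lambda>x u. c * A x u) = (\<lambda>x u. c * phi0 r A x u)"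
  by (rule phi0_eq[OF Ualg.smul Rel_smul[OF phi0_Rel]])
lemma phi0_comp: "A \<in> Ualg (Suc r) \<Longrightarrow> B \<in> Ualg (Suc r) \<Longrightarrow> phi0 r (A \<circ> B) = phi0 r A \<circ> phi0 r B"
  by (rule phi0_eq[OF Ualg.comp Rel_comp[OF phi0_Rel phi0_Rel]])
lemma phi0_one: "phi0 r (restr (Suc r) id) = restr r id"
  by (rule phi0_eq[OF Ualg.one Rel_one])
lemma phi0_E: "phi0 r (zE (Suc r) i) = zE r i" by (rule phi0_eq[OF Ualg.genE Rel_E])
lemma phi0_F: "phi0 r (zF (Suc r) i) = zF r i" by (rule phi0_eq[OF Ualg.genF Rel_F])
lemma phi0_K: "phi0 r (zK (Suc r) i) = zK r i" by (rule phi0_eq[OF Ualg.genK Rel_K])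
lemma phi0_Ki: "phi0 r (zKinv (Suc r) i) = zKinv r i" by (rule phi0_eq[OF Ualg.genKinv Rel_Ki])

lemma phi0_surj: "A' \<in> Ualg r \<Longrightarrow> \<exists>A\<in>Ualg (Suc r). phi0 r A = A'"
proof (induction rule: Ualg.induct)
  case one then show ?case using phi0_one Ualg.one by blast
next
  case (genE a) then show ?case using phi0_E Ualg.genE by blast
next
  case (genF a) then show ?case using phi0_F Ualg.genF by blast
next
  case (genK a) then show ?case using phi0_K Ualg.genK by blast
next
  case (genKinv a) then show ?case using phi0_Ki Ualg.genKinv by blast
next
  case (add A B)
  then obtain A1 B1 where h: "A1 \<in> Ualg (Suc r)" "B1 \<in> Ualg (Suc r)" "phi0 r A1 = A" "phi0 r B1 = B" by blast
  show ?case using h phi0_add[OF h(1,2)] Ualg.add[OF h(1,2)] by blast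
next
  case (smul A c)
  then obtain A1 where h: "A1 \<in> Ualg (Suc r)" "phi0 r A1 = A" by blast
  show ?case using h phi0_smul[OF h(1)] Ualg.smul[OF h(1)] by blast
next
  case (comp A B)
  then obtain A1 B1 where h: "A1 \<in> Ualg (Suc r)" "B1 \<in> Ualg (Suc r)" "phi0 r A1 = A" "phi0 r B1 = B" by blast
  show ?case using h phi0_comp[OF h(1,2)] Ualg.comp[OF h(1,2)] by blast
qed

lemma Uhom_phi0: "Uhom r (phi0 r)"
  unfolding Uhom_def
proof (intro conjI ballI allI)
  show "phi0 r ` Ualg (Suc r) = Ualg r"
    using phi0_Ualg phi0_surj by blast
qed (simp_all add: phi0_one phi0_add phi0_smul phi0_comp phi0_E phi0_F phi0_K)


lemma part3b:
  assumes H: "Uhom r phi" and C: "Cobj r sm rho"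
  shows "Cobj (Suc r) sm (rho \<circ> phi)"
proof -
  have U: "Umodule r sm rho" and W: "weight_module sm (\<lambda>i. rho (zK r i))" using C unfolding Cobj_def by blast+
  have img: "phi ` Ualg (Suc r) = Ualg r" using H unfolding Uhom_def by blast
  have inU: "A \<in> Ualg (Suc r) \<Longrightarrow> phi A \<in> Ualg r" for A using img by blast
  have h1: "phi (restr (Suc r) id) = restr r id"
    and h2: "\<And>A B. A\<in>Ualg (Suc r) \<Longrightarrow> B\<in>Ualg (Suc r) \<Longrightarrow> phi (\<lambda>x u. A x u + B x u) = (\<lambda>x u. phi A x u + phi B x u)"
    and h3: "\<And>c A. A\<in>Ualg (Suc r) \<Longrightarrow> phi (\<lambda>x u. c * A x u) = (\<lambda>x u. c * phi A x u)"
    and h4: "\<And>A B. A\<in>Ualg (Suc r) \<Longrightarrow> B\<in>Ualg (Suc r) \<Longrightarrow> phi (A \<circ> B) = phi A \<circ> phi B"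
    and h5: "\<And>i. phi (zK (Suc r) i) = zK r i"
    using H unfolding Uhom_def by blast+
  have "Umodule (Suc r) sm (rho \<circ> phi)"
    unfolding Umodule_def
  proof (intro conjI ballI allI)
    show "vector_space sm" by (rule U_vs[OF U])
  next
    fix A assume "A \<in> Ualg (Suc r)"
    then show "Vector_Spaces.linear sm sm ((rho \<circ> phi) A)" using U_lin[OF U] inU by simp
  next
    show "(rho \<circ> phi) (restr (Suc r) id) = id" using U h1 unfolding Umodule_def by simp
  next
    fix A B assume a: "A \<in> Ualg (Suc r)" "B \<in> Ualg (Suc r)"
    show "(rho \<circ> phi) (\<lambda>x u. A x u + B x u) = (\<lambda>m. (rho \<circ> phi) A m + (rho \<circ> phi) B m)"
      using U_add[OF U inU[OF a(1)] inU[OF a(2)]] by (simp add: h2[OF a] fun_eq_iff)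
    show "(rho \<circ> phi) (A \<circ> B) = (rho \<circ> phi) A \<circ> (rho \<circ> phi) B"
      using U_comp[OF U inU[OF a(1)] inU[OF a(2)]] by (simp add: h4[OF a] fun_eq_iff)
  next
    fix c A assume a: "A \<in> Ualg (Suc r)"
    show "(rho \<circ> phi) (\<lambda>x u. c * A x u) = (\<lambda>m. sm c ((rho \<circ> phi) A m))"
      using U_smul[OF U inU[OF a]] by (simp add: h3[OF a] fun_eq_iff)
  qed
  moreover have "weight_module sm (\<lambda>i. (rho \<circ> phi) (zK (Suc r) i))" using W h5 by simp
  ultimately show ?thesis unfolding Cobj_def by blast
qed

lemma part3c:
  assumes H: "Uhom r phi"
  shows "(\<forall>A\<in>Ualg r. \<forall>m. f (rhoM A m) = rhoN A (f m)) \<longleftrightarrow>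
         (\<forall>B\<in>Ualg (Suc r). \<forall>m. f ((rhoM \<circ> phi) B m) = (rhoN \<circ> phi) B (f m))"
proof -
  have img: "phi ` Ualg (Suc r) = Ualg r" using H unfolding Uhom_def by blast
  show ?thesis by (simp add: img[symmetric])
qed


theorem proposition11p1:
  fixes smM :: "K \<Rightarrow> 'm::ab_group_add \<Rightarrow> 'm" and smN :: "K \<Rightarrow> 'n::ab_group_add \<Rightarrow> 'n"
  shows
   "(\<forall>r rhoM. Cobj r smM rhoM \<longrightarrow>
        Uinf_module smM (\<lambda>i. rhoM (zE r i)) (\<lambda>i. rhoM (zF r i)) (\<lambda>i. rhoM (zK r i)) (\<lambda>i. rhoM (zKinv r i))
      \<and> Cpol smM (\<lambda>i. rhoM (zK r i))
      \<and> Cint smM (\<lambda>i. rhoM (zE r i)) (\<lambda>i. rhoM (zF r i)) (\<lambda>i. rhoM (zK r i)))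
    \<and> (\<forall>r rhoM rhoN f. Cobj r smM rhoM \<and> Cobj r smN rhoN \<and> Vector_Spaces.linear smM smN f \<longrightarrow>
        ((\<forall>A\<in>Ualg r. \<forall>m. f (rhoM A m) = rhoN A (f m)) \<longleftrightarrow>
         (\<forall>i m. f (rhoM (zE r i) m) = rhoN (zE r i) (f m) \<and> f (rhoM (zF r i) m) = rhoN (zF r i) (f m)
              \<and> f (rhoM (zK r i) m) = rhoN (zK r i) (f m) \<and> f (rhoM (zKinv r i) m) = rhoN (zKinv r i) (f m))))
    \<and> (\<forall>r. (\<exists>phi. Uhom r phi)
        \<and> (\<forall>phi. Uhom r phi \<longrightarrow>
             (\<forall>rhoM. Cobj r smM rhoM \<longrightarrow> Cobj (Suc r) smM (rhoM \<circ> phi))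
           \<and> (\<forall>rhoM rhoN f. Cobj r smM rhoM \<and> Cobj r smN rhoN \<and> Vector_Spaces.linear smM smN f \<longrightarrow>
                ((\<forall>A\<in>Ualg r. \<forall>m. f (rhoM A m) = rhoN A (f m)) \<longleftrightarrow>
                 (\<forall>B\<in>Ualg (Suc r). \<forall>m. f ((rhoM \<circ> phi) B m) = (rhoN \<circ> phi) B (f m))))))"
proof -
  have P1: "Uinf_module smM (\<lambda>i. rhoM (zE r i)) (\<lambda>i. rhoM (zF r i)) (\<lambda>i. rhoM (zK r i)) (\<lambda>i. rhoM (zKinv r i))
      \<and> Cpol smM (\<lambda>i. rhoM (zK r i))
      \<and> Cint smM (\<lambda>i. rhoM (zE r i)) (\<lambda>i. rhoM (zF r i)) (\<lambda>i. rhoM (zK r i))"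
    if "Cobj r smM rhoM" for r rhoM
  proof -
    have U: "Umodule r smM rhoM" and W: "weight_module smM (\<lambda>i. rhoM (zK r i))"
      using that unfolding Cobj_def by blast+
    show ?thesis using part1_uinf[OF U] part1_Cpol[OF U W] part1_Cint[OF U W] by blast
  qed
  have P2: "((\<forall>A\<in>Ualg r. \<forall>m. f (rhoM A m) = rhoN A (f m)) \<longleftrightarrow>
         (\<forall>i m. f (rhoM (zE r i) m) = rhoN (zE r i) (f m) \<and> f (rhoM (zF r i) m) = rhoN (zF r i) (f m)
              \<and> f (rhoM (zK r i) m) = rhoN (zK r i) (f m) \<and> f (rhoM (zKinv r i) m) = rhoN (zKinv r i) (f m)))"
    if "Cobj r smM rhoM \<and> Cobj r smN rhoN \<and> Vector_Spaces.linear smM smN f" for r rhoM rhoN f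
    using that part2[of r smM rhoM smN rhoN f] unfolding Cobj_def by blast
  show ?thesis
  proof (intro conjI allI impI)
    fix r rhoM assume "Cobj r smM rhoM" then show "Uinf_module smM (\<lambda>i. rhoM (zE r i)) (\<lambda>i. rhoM (zF r i)) (\<lambda>i. rhoM (zK r i)) (\<lambda>i. rhoM (zKinv r i))"
      using P1 by blast
  next
    fix r rhoM assume "Cobj r smM rhoM" then show "Cpol smM (\<lambda>i. rhoM (zK r i))"
      using P1 by blast
  next
    fix r rhoM assume "Cobj r smM rhoM" then show "Cint smM (\<lambda>i. rhoM (zE r i)) (\<lambda>i. rhoM (zF r i)) (\<lambda>i. rhoM (zK r i))"
      using P1 by blast
  next
    fix r rhoM rhoN f assume "Cobj r smM rhoM \<and> Cobj r smN rhoN \<and> Vector_Spaces.linear smM smN f"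
    then show "((\<forall>A\<in>Ualg r. \<forall>m. f (rhoM A m) = rhoN A (f m)) \<longleftrightarrow>
         (\<forall>i m. f (rhoM (zE r i) m) = rhoN (zE r i) (f m) \<and> f (rhoM (zF r i) m) = rhoN (zF r i) (f m)
              \<and> f (rhoM (zK r i) m) = rhoN (zK r i) (f m) \<and> f (rhoM (zKinv r i) m) = rhoN (zKinv r i) (f m)))"
      by (rule P2)
  next
    fix r show "\<exists>phi. Uhom r phi" using Uhom_phi0 by blast
  next
    fix r phi rhoM assume "Uhom r phi" "Cobj r smM rhoM"
    then show "Cobj (Suc r) smM (rhoM \<circ> phi)" by (rule part3b)
  next
    fix r phi rhoM rhoN f assume "Uhom r phi"
    then show "(\<forall>A\<in>Ualg r. \<forall>m. f (rhoM A m) = rhoN A (f m)) \<longleftrightarrow>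
                 (\<forall>B\<in>Ualg (Suc r). \<forall>m. f ((rhoM \<circ> phi) B m) = (rhoN \<circ> phi) B (f m))"
      by (rule part3c)
  qed
qed

end
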